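(* Let $\lambda\in\mathbb{R}$ and let $f(\zeta,u)$ be a complex function on a connected open set $U\subset\mathbb{C}_\zeta\times\mathbb{R}_u$, jointly smooth and holomorphic in $\zeta$, with $f_{,\zeta\zeta}\neq0$ and $f_{,\zeta\zeta\zeta}\neq0$ on $U$. Put $\phi=(\ln f_{,\zeta\zeta})_{,\zeta}$ and $\psi=(\ln f_{,\zeta\zeta})_{,u}$. Then $$\left(\frac{\psi}{\phi}\right)_{,\zeta}=i\lambda\left[\left(\frac{2}{\phi}\right)_{,\zeta}+1\right]\quad\text{on }U$$ if and only if, near every point of $U$, $$f(\zeta,u)=\mathrm{f}\big(\zeta e^{i\lambda u}-h(u)\big)+A_1(u)\zeta+A_0(u)$$ for some holomorphic function $\mathrm{f}$ of one complex variable with $\mathrm{f}'''\neq0$ and smooth complex functions $h,A_1,A_0$ of $u$.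
   Context: Subscripts after a comma denote partial derivatives; $\zeta$ is a complex variable and $u$ a real variable; primes denote derivatives of $\mathrm{f}$ with respect to its argument. *)

theory Defs
  imports "HOL-Complex_Analysis.Complex_Analysis"
begin

fun iter_dd :: "'a list \<Rightarrow> ('a::real_normed_vector \<Rightarrow> 'b::real_normed_vector) \<Rightarrow> 'a \<Rightarrow> 'b" where
  "iter_dd [] g = g"
| "iter_dd (v # vs) g = (\<lambda>x. vector_derivative (\<lambda>t. iter_dd vs g (x + t *\<^sub>R v)) (at 0))"

text \<open>On open subsets of a finite-dimensional
  space this is the usual notion of smoothness.\<close>
definition smooth_on :: "'a::real_normed_vector set \<Rightarrow> ('a \<Rightarrow> 'b::real_normed_vector) \<Rightarrow> bool" where
  "smooth_on S g \<longleftrightarrow>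
     (\<forall>vs v x. x \<in> S \<longrightarrow>
        ((\<lambda>t. iter_dd vs g (x + t *\<^sub>R v)) has_vector_derivative iter_dd (v # vs) g x) (at 0)) \<and>
     (\<forall>vs. continuous_on S (iter_dd vs g))"

definition pz :: "(complex \<times> real \<Rightarrow> complex) \<Rightarrow> complex \<times> real \<Rightarrow> complex" where
  "pz g p = deriv (\<lambda>z. g (z, snd p)) (fst p)"

definition pu :: "(complex \<times> real \<Rightarrow> complex) \<Rightarrow> complex \<times> real \<Rightarrow> complex" where
  "pu g p = vector_derivative (\<lambda>t. g (fst p, t)) (at (snd p))"

text \<open>\<phi> = (ln f_{,\<zeta>\<zeta>})_{,\<zeta>} = f_{,\<zeta>\<zeta>\<zeta>}/f_{,\<zeta>\<zeta>},
      \<psi> = (ln f_{,\<zeta>\<zeta>})_{,u} = (f_{,\<zeta>\<zeta>})_{,u}/f_{,\<zeta>\<zeta>} (logarithmic derivatives,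
  independent of the branch of the logarithm).\<close>
definition phi :: "(complex \<times> real \<Rightarrow> complex) \<Rightarrow> complex \<times> real \<Rightarrow> complex" where
  "phi f p = pz (pz (pz f)) p / pz (pz f) p"

definition psi :: "(complex \<times> real \<Rightarrow> complex) \<Rightarrow> complex \<times> real \<Rightarrow> complex" where
  "psi f p = pu (pz (pz f)) p / pz (pz f) p"

end

theory Submission
  imports Defs
begin


fun Ck :: "nat \<Rightarrow> real set \<Rightarrow> (real \<Rightarrow> complex) \<Rightarrow> bool" where
  "Ck 0 S g = True"
| "Ck (Suc n) S g = (\<exists>g'. (\<forall>x\<in>S. (g has_vector_derivative g' x) (at x)) \<and> Ck n S g')"

definition sm :: "real set \<Rightarrow> (real \<Rightarrow> complex) \<Rightarrow> bool" where
  "sm S g \<longleftrightarrow> (\<forall>n. Ck n S g)"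

lemma Ck_mono: "Ck (Suc n) S g \<Longrightarrow> Ck n S g"
proof (induction n arbitrary: g)
  case 0 then show ?case by simp
next
  case (Suc n)
  then obtain g' where "\<forall>x\<in>S. (g has_vector_derivative g' x) (at x)" "Ck (Suc n) S g'" by auto
  then show ?case using Suc.IH by auto
qed

lemma Ck_transfer: "Ck n S g \<Longrightarrow> open S \<Longrightarrow> (\<And>x. x \<in> S \<Longrightarrow> g x = g2 x) \<Longrightarrow> Ck n S g2"
proof (induction n arbitrary: g g2)
  case 0 then show ?case by simp
next
  case (Suc n)
  then obtain g' where d: "\<forall>x\<in>S. (g has_vector_derivative g' x) (at x)" "Ck n S g'" by auto
  have "\<forall>x\<in>S. (g2 has_vector_derivative g' x) (at x)"
    using d(1) Suc.prems by (metis has_vector_derivative_transform_within_open)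
  then show ?case using d(2) by auto
qed

lemma Ck_const: "Ck n S (\<lambda>x. c)"
proof (induction n arbitrary: c)
  case (Suc n) then show ?case by (auto intro!: exI[of _ "\<lambda>x. 0"] derivative_eq_intros)
qed simp

lemma Ck_add: "Ck n S a \<Longrightarrow> Ck n S b \<Longrightarrow> Ck n S (\<lambda>x. a x + b x)"
proof (induction n arbitrary: a b)
  case (Suc n)
  then obtain a' b' where "\<forall>x\<in>S. (a has_vector_derivative a' x) (at x)" "Ck n S a'"
     "\<forall>x\<in>S. (b has_vector_derivative b' x) (at x)" "Ck n S b'" by auto
  then show ?case using Suc.IH
    by (auto intro!: exI[of _ "\<lambda>x. a' x + b' x"] derivative_eq_intros)
qed simp

lemma Ck_mult: "Ck n S a \<Longrightarrow> Ck n S b \<Longrightarrow> Ck n S (\<lambda>x. a x * b x)"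
proof (induction n arbitrary: a b)
  case (Suc n)
  then obtain a' b' where A: "\<forall>x\<in>S. (a has_vector_derivative a' x) (at x)" "Ck n S a'"
     "\<forall>x\<in>S. (b has_vector_derivative b' x) (at x)" "Ck n S b'" by auto
  have "Ck n S a" "Ck n S b" using Suc.prems Ck_mono by blast+
  then have "Ck n S (\<lambda>x. a x * b' x + a' x * b x)" using Suc.IH A Ck_add by blast
  moreover have "\<forall>x\<in>S. ((\<lambda>x. a x * b x) has_vector_derivative (a x * b' x + a' x * b x)) (at x)"
    using A by (auto intro!: has_vector_derivative_mult)
  ultimately show ?case by auto
qed simp

lemma Ck_inverse: "Ck n S a \<Longrightarrow> (\<And>x. x \<in> S \<Longrightarrow> a x \<noteq> 0) \<Longrightarrow> Ck n S (\<lambda>x. inverse (a x))"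
proof (induction n arbitrary: a)
  case (Suc n)
  then obtain a' where A: "\<forall>x\<in>S. (a has_vector_derivative a' x) (at x)" "Ck n S a'" by auto
  have "Ck n S a" using Suc.prems Ck_mono by blast
  then have I: "Ck n S (\<lambda>x. inverse (a x))" using Suc by blast
  have "Ck n S (\<lambda>x. - a' x * (inverse (a x) * inverse (a x)))"
    using Ck_mult[OF Ck_mult[OF Ck_const[of n S "-1"] A(2)] Ck_mult[OF I I]] by simp
  moreover have "\<forall>x\<in>S. ((\<lambda>x. inverse (a x)) has_vector_derivative (- a' x * (inverse (a x) * inverse (a x)))) (at x)"
  proof
    fix x assume x: "x \<in> S"
    have "(inverse has_field_derivative - (inverse (a x) ^ Suc (Suc 0))) (at (a x))"
      using Suc.prems(2)[OF x] by (rule DERIV_inverse)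
    from field_vector_diff_chain_at[OF A(1)[rule_format, OF x] this]
    show "((\<lambda>x. inverse (a x)) has_vector_derivative (- a' x * (inverse (a x) * inverse (a x)))) (at x)"
      by (simp add: o_def power2_eq_square)
  qed
  ultimately show ?case by auto
qed simp

lemma Ck_holo_comp:
  assumes "Ck n S \<gamma>" "open W" "\<And>x. x \<in> S \<Longrightarrow> \<gamma> x \<in> W" "H holomorphic_on W"
  shows "Ck n S (\<lambda>x. H (\<gamma> x))"
  using assms
proof (induction n arbitrary: H)
  case (Suc n)
  then obtain g' where A: "\<forall>x\<in>S. (\<gamma> has_vector_derivative g' x) (at x)" "Ck n S g'" by auto
  have hd: "deriv H holomorphic_on W" using Suc.prems holomorphic_deriv by blast
  have "Ck n S \<gamma>" using Suc.prems Ck_mono by blast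
  then have "Ck n S (\<lambda>x. deriv H (\<gamma> x))" using Suc.IH hd Suc.prems by blast
  then have "Ck n S (\<lambda>x. g' x * deriv H (\<gamma> x))" using Ck_mult A(2) by blast
  moreover have "\<forall>x\<in>S. ((\<lambda>x. H (\<gamma> x)) has_vector_derivative (g' x * deriv H (\<gamma> x))) (at x)"
  proof
    fix x assume x: "x \<in> S"
    have "(H has_field_derivative deriv H (\<gamma> x)) (at (\<gamma> x))"
      using Suc.prems x by (meson DERIV_deriv_iff_field_differentiable holomorphic_on_imp_differentiable_at)
    from field_vector_diff_chain_at[OF A(1)[rule_format, OF x] this]
    show "((\<lambda>x. H (\<gamma> x)) has_vector_derivative (g' x * deriv H (\<gamma> x))) (at x)"
      by (simp add: o_def)
  qed
  ultimately show ?case by auto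
qed simp

lemma Ck_id: "Ck n S (\<lambda>x. complex_of_real x)"
proof (cases n)
  case (Suc m)
  have "\<forall>x\<in>S. ((\<lambda>x. complex_of_real x) has_vector_derivative 1) (at x)"
    by (auto intro!: derivative_eq_intros has_vector_derivative_real_field)
  then show ?thesis using Suc Ck_const by auto
qed simp

lemma sm_add: "sm S a \<Longrightarrow> sm S b \<Longrightarrow> sm S (\<lambda>x. a x + b x)"
  by (simp add: sm_def Ck_add)
lemma sm_mult: "sm S a \<Longrightarrow> sm S b \<Longrightarrow> sm S (\<lambda>x. a x * b x)"
  by (simp add: sm_def Ck_mult)
lemma sm_const: "sm S (\<lambda>x. c)" by (simp add: sm_def Ck_const)
lemma sm_id: "sm S (\<lambda>x. complex_of_real x)" by (simp add: sm_def Ck_id)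
lemma sm_inverse: "sm S a \<Longrightarrow> (\<And>x. x \<in> S \<Longrightarrow> a x \<noteq> 0) \<Longrightarrow> sm S (\<lambda>x. inverse (a x))"
  by (simp add: sm_def Ck_inverse)
lemma sm_divide: "sm S a \<Longrightarrow> sm S b \<Longrightarrow> (\<And>x. x \<in> S \<Longrightarrow> b x \<noteq> 0) \<Longrightarrow> sm S (\<lambda>x. a x / b x)"
  using sm_mult[OF _ sm_inverse] by (simp add: divide_inverse)
lemma sm_diff: "sm S a \<Longrightarrow> sm S b \<Longrightarrow> sm S (\<lambda>x. a x - b x)"
  using sm_add[OF _ sm_mult[OF sm_const[of S "-1"]], of a b] by simp
lemma sm_holo_comp: "sm S \<gamma> \<Longrightarrow> open W \<Longrightarrow> (\<And>x. x \<in> S \<Longrightarrow> \<gamma> x \<in> W) \<Longrightarrow> H holomorphic_on W \<Longrightarrow> sm S (\<lambda>x. H (\<gamma> x))"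
  by (simp add: sm_def Ck_holo_comp)
lemma sm_transfer: "sm S g \<Longrightarrow> open S \<Longrightarrow> (\<And>x. x \<in> S \<Longrightarrow> g x = g2 x) \<Longrightarrow> sm S g2"
  by (meson sm_def Ck_transfer)
lemma sm_exp: "sm S (\<lambda>x. exp (c * complex_of_real x))"
  by (rule sm_holo_comp[where W=UNIV and H=exp, OF sm_mult[OF sm_const sm_id]]) (auto intro: holomorphic_on_exp)

lemma sm_deriv: "sm S g \<Longrightarrow> (\<forall>x\<in>S. (g has_vector_derivative g' x) (at x)) \<Longrightarrow> open S \<Longrightarrow> sm S g'"
  unfolding sm_def
proof
  fix n assume "\<forall>n. Ck n S g" and d: "\<forall>x\<in>S. (g has_vector_derivative g' x) (at x)" "open S"
  then obtain g2 where "\<forall>x\<in>S. (g has_vector_derivative g2 x) (at x)" "Ck n S g2"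
    by (metis Ck.simps(2))
  moreover have "\<And>x. x \<in> S \<Longrightarrow> g2 x = g' x"
    using calculation d by (meson vector_derivative_unique_at)
  ultimately show "Ck n S g'" using Ck_transfer d by blast
qed

lemma sm_primitive: "sm S g' \<Longrightarrow> (\<forall>x\<in>S. (g has_vector_derivative g' x) (at x)) \<Longrightarrow> sm S g"
  unfolding sm_def
proof
  fix n assume "\<forall>n. Ck n S g'" "\<forall>x\<in>S. (g has_vector_derivative g' x) (at x)"
  then have "Ck (Suc n) S g" by auto
  then show "Ck n S g" using Ck_mono by blast
qed




lemma shift_vd:
  fixes k :: "real \<Rightarrow> 'a::real_normed_vector"
  assumes "((\<lambda>t. k (u + t)) has_vector_derivative D) (at 0)"
  shows "(k has_vector_derivative D) (at u)"
proof -
  have d1: "((\<lambda>s. s - u) has_vector_derivative 1) (at u)"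
    by (auto intro!: derivative_eq_intros)
  have "((\<lambda>t. k (u + t)) has_vector_derivative D) (at ((\<lambda>s. s - u) u))" using assms by simp
  from vector_diff_chain_at[OF d1 this] show ?thesis by (simp add: o_def)
qed

fun dd :: "nat \<Rightarrow> (real \<Rightarrow> complex) \<Rightarrow> real \<Rightarrow> complex" where
  "dd 0 g = g"
| "dd (Suc n) g = (\<lambda>x. vector_derivative (dd n g) (at x))"

lemma sm_vd:
  assumes "sm S g" "open S"
  shows "\<forall>x\<in>S. (g has_vector_derivative vector_derivative g (at x)) (at x)"
    "sm S (\<lambda>x. vector_derivative g (at x))"
proof -
  obtain g' where g': "\<forall>x\<in>S. (g has_vector_derivative g' x) (at x)"
    using assms unfolding sm_def by (metis Ck.simps(2))
  then have e: "\<And>x. x \<in> S \<Longrightarrow> vector_derivative g (at x) = g' x"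
    by (simp add: vector_derivative_at)
  show "\<forall>x\<in>S. (g has_vector_derivative vector_derivative g (at x)) (at x)" using g' e by simp
  have "sm S g'" using sm_deriv g' assms by blast
  then show "sm S (\<lambda>x. vector_derivative g (at x))" using sm_transfer assms e by metis
qed

lemma sm_dd:
  assumes "sm S g" "open S"
  shows "sm S (dd n g) \<and> (\<forall>x\<in>S. (dd n g has_vector_derivative dd (Suc n) g x) (at x))"
proof (induction n)
  case 0 then show ?case using sm_vd[OF assms] assms by simp
next
  case (Suc n)
  then have "sm S (dd (Suc n) g)" using sm_vd assms by simp
  then show ?case using sm_vd assms by simp
qed

lemma iter_dd_real_B:
  assumes "sm S g" "open S" "x \<in> S"
    and A: "\<And>y. y \<in> S \<Longrightarrow> iter_dd vs g y = of_real (prod_list vs) * dd (length vs) g y"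
  shows "((\<lambda>t. iter_dd vs g (x + t *\<^sub>R v)) has_vector_derivative (of_real (prod_list vs) * (of_real v * dd (Suc (length vs)) g x))) (at 0)"
proof -
  define T where "T = {t::real. x + t * v \<in> S}"
  have oT: "open T" unfolding T_def
    by (rule open_vimage[OF assms(2), of "\<lambda>t. x + t * v", unfolded vimage_def]) (auto intro!: continuous_intros)
  have T0: "0 \<in> T" using assms by (simp add: T_def)
  have eq: "\<And>t. t \<in> T \<Longrightarrow> of_real (prod_list vs) * dd (length vs) g (x + t * v) = iter_dd vs g (x + t *\<^sub>R v)"
    using A unfolding T_def by auto
  have d1: "((\<lambda>t. x + t * v) has_vector_derivative v) (at 0)"
    by (auto intro!: derivative_eq_intros)
  have "(dd (length vs) g has_vector_derivative dd (Suc (length vs)) g x) (at ((\<lambda>t. x + t * v) 0))"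
    using sm_dd[OF assms(1,2)] assms(3) by simp
  from vector_diff_chain_at[OF d1 this]
  have "((\<lambda>t. dd (length vs) g (x + t * v)) has_vector_derivative
      (v *\<^sub>R dd (Suc (length vs)) g x)) (at 0)"
    by (simp add: o_def)
  then have "((\<lambda>t. of_real (prod_list vs) * dd (length vs) g (x + t * v)) has_vector_derivative
      of_real (prod_list vs) * (v *\<^sub>R dd (Suc (length vs)) g x)) (at 0)"
    by (rule has_vector_derivative_mult_right)
  then have D: "((\<lambda>t. iter_dd vs g (x + t *\<^sub>R v)) has_vector_derivative
      of_real (prod_list vs) * (v *\<^sub>R dd (Suc (length vs)) g x)) (at 0)"
    by (rule has_vector_derivative_transform_within_open[OF _ oT T0]) (simp add: eq)
  then show ?thesis by (simp add: scaleR_conv_of_real)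
qed

lemma iter_dd_real_A:
  assumes "sm S g" "open S"
  shows "y \<in> S \<Longrightarrow> iter_dd vs g y = of_real (prod_list vs) * dd (length vs) g y"
proof (induction vs arbitrary: y)
  case Nil then show ?case by simp
next
  case (Cons w vs)
  have "iter_dd (w # vs) g y = vector_derivative (\<lambda>t. iter_dd vs g (y + t *\<^sub>R w)) (at 0)" by simp
  also have "\<dots> = of_real (prod_list vs) * (of_real w * dd (Suc (length vs)) g y)"
    by (rule vector_derivative_at, rule iter_dd_real_B[OF assms Cons.prems Cons.IH])
  finally show ?case by (simp add: mult.assoc mult.left_commute)
qed

lemma sm_smooth_on:
  assumes "sm S g" "open S"
  shows "smooth_on S g"
  unfolding smooth_on_def
proof (intro conjI allI impI)
  fix vs v x assume x: "x \<in> S"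
  have B: "((\<lambda>t. iter_dd vs g (x + t *\<^sub>R v)) has_vector_derivative (of_real (prod_list vs) * (of_real v * dd (Suc (length vs)) g x))) (at 0)"
    by (rule iter_dd_real_B[OF assms x iter_dd_real_A[OF assms]])
  moreover have "iter_dd (v # vs) g x = of_real (prod_list vs) * (of_real v * dd (Suc (length vs)) g x)"
    using vector_derivative_at[OF B] by simp
  ultimately show "((\<lambda>t. iter_dd vs g (x + t *\<^sub>R v)) has_vector_derivative iter_dd (v # vs) g x) (at 0)"
    by simp
next
  fix vs
  have "continuous_on S (\<lambda>y. of_real (prod_list vs) * dd (length vs) g y)"
  proof (intro continuous_on_mult continuous_on_const)
    show "continuous_on S (dd (length vs) g)"
      using sm_dd[OF assms]
      by (meson assms(2) continuous_at_imp_continuous_on has_vector_derivative_continuous)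
  qed
  then show "continuous_on S (iter_dd vs g)"
    by (rule continuous_on_eq) (simp add: iter_dd_real_A[OF assms])
qed




lemma open_slice_u: "open U \<Longrightarrow> open {u::real. (z::complex, u) \<in> U}"
  by (rule open_vimage[of U "\<lambda>u. (z,u)", unfolded vimage_def]) (auto intro!: continuous_intros)

lemma open_slice_z: "open U \<Longrightarrow> open {z::complex. (z, u::real) \<in> U}"
  by (rule open_vimage[of U "\<lambda>z. (z,u)", unfolded vimage_def]) (auto intro!: continuous_intros)

lemma slice_deriv_u:
  assumes "smooth_on U f" "(z, u) \<in> U"
  shows "((\<lambda>t. iter_dd vs f (z, t)) has_vector_derivative iter_dd ((0,1) # vs) f (z, u)) (at u)"
proof (rule shift_vd)
  have "((\<lambda>t. iter_dd vs f ((z,u) + t *\<^sub>R (0,1))) has_vector_derivative iter_dd ((0,1) # vs) f (z, u)) (at 0)"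
    using assms unfolding smooth_on_def by blast
  then show "((\<lambda>t. iter_dd vs f (z, u + t)) has_vector_derivative iter_dd ((0,1) # vs) f (z, u)) (at 0)"
    by simp
qed

lemma slice_sm:
  assumes "smooth_on U f" "open U"
  shows "sm {u. (z, u) \<in> U} (\<lambda>t. iter_dd vs f (z, t))"
  unfolding sm_def
proof
  fix n show "Ck n {u. (z, u) \<in> U} (\<lambda>t. iter_dd vs f (z, t))"
  proof (induction n arbitrary: vs)
    case (Suc n)
    then show ?case using slice_deriv_u[OF assms(1)]
      by (auto intro!: exI[of _ "\<lambda>t. iter_dd ((0,1) # vs) f (z, t)"])
  qed simp
qed

lemma e1_vd:
  assumes "open U" "(z, u) \<in> U" "(\<lambda>\<xi>. \<Phi> (\<xi>, u)) holomorphic_on {\<xi>. (\<xi>, u) \<in> U}"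
  shows "((\<lambda>t. \<Phi> ((z, u) + t *\<^sub>R (1,0))) has_vector_derivative pz \<Phi> (z, u)) (at 0)"
proof -
  have d1: "((\<lambda>t. z + of_real t) has_vector_derivative 1) (at 0)"
    by (auto intro!: derivative_eq_intros has_vector_derivative_real_field)
  have "((\<lambda>\<xi>. \<Phi> (\<xi>, u)) has_field_derivative deriv (\<lambda>\<xi>. \<Phi> (\<xi>, u)) z) (at ((\<lambda>t. z + of_real t) 0))"
    using assms open_slice_z[OF assms(1)]
    by (simp add: DERIV_deriv_iff_field_differentiable holomorphic_on_imp_differentiable_at)
  from field_vector_diff_chain_at[OF d1 this]
  show ?thesis by (simp add: o_def pz_def scaleR_conv_of_real)
qed

lemma vd_local:
  fixes p :: "'a::real_normed_vector"
  assumes "open U" "p \<in> U" "\<And>q. q \<in> U \<Longrightarrow> A q = B q"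
  shows "vector_derivative (\<lambda>t. A (p + t *\<^sub>R v)) (at 0) = vector_derivative (\<lambda>t. B (p + t *\<^sub>R v)) (at 0)"
proof (rule vector_derivative_cong_eq)
  have "open {t::real. p + t *\<^sub>R v \<in> U}"
    by (rule open_vimage[OF assms(1), of "\<lambda>t. p + t *\<^sub>R v", unfolded vimage_def]) (auto intro!: continuous_intros)
  moreover have "0 \<in> {t::real. p + t *\<^sub>R v \<in> U}" using assms by simp
  ultimately have "eventually (\<lambda>t. t \<in> {t::real. p + t *\<^sub>R v \<in> U}) (nhds 0)"
    by (rule eventually_nhds_in_open)
  then show "eventually (\<lambda>t. t \<in> UNIV \<longrightarrow> A (p + t *\<^sub>R v) = B (p + t *\<^sub>R v)) (nhds 0)"
    by (rule eventually_mono) (use assms in auto)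
qed auto

lemma pz_holo:
  assumes "open U" "(\<lambda>\<xi>. \<Phi> (\<xi>, u)) holomorphic_on {\<xi>. (\<xi>, u) \<in> U}"
  shows "(\<lambda>\<xi>. pz \<Phi> (\<xi>, u)) holomorphic_on {\<xi>. (\<xi>, u) \<in> U}"
  unfolding pz_def using holomorphic_deriv[OF assms(2) open_slice_z[OF assms(1)]] by simp

lemma pz_iter:
  assumes "open U" "\<And>u. (\<lambda>\<xi>. f (\<xi>, u)) holomorphic_on {\<xi>. (\<xi>, u) \<in> U}"
  shows "(\<forall>u. (\<lambda>\<xi>. (pz ^^ k) f (\<xi>, u)) holomorphic_on {\<xi>. (\<xi>, u) \<in> U}) \<and>
         (\<forall>p\<in>U. iter_dd (replicate k (1,0)) f p = (pz ^^ k) f p)"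
proof (induction k)
  case 0 then show ?case using assms by simp
next
  case (Suc k)
  have H: "\<forall>u. (\<lambda>\<xi>. (pz ^^ Suc k) f (\<xi>, u)) holomorphic_on {\<xi>. (\<xi>, u) \<in> U}"
    using Suc pz_holo[OF assms(1)] by simp
  have "iter_dd (replicate (Suc k) (1,0)) f p = (pz ^^ Suc k) f p" if p: "p \<in> U" for p
  proof -
    obtain z u where pzu: "p = (z, u)" by fastforce
    have "iter_dd (replicate (Suc k) (1,0)) f p
       = vector_derivative (\<lambda>t. iter_dd (replicate k (1,0)) f (p + t *\<^sub>R (1,0))) (at 0)" by simp
    also have "\<dots> = vector_derivative (\<lambda>t. (pz ^^ k) f (p + t *\<^sub>R (1,0))) (at 0)"
      by (rule vd_local[OF assms(1) p]) (use Suc in auto)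
    also have "\<dots> = pz ((pz ^^ k) f) p"
      unfolding pzu by (rule vector_derivative_at, rule e1_vd[OF assms(1)]) (use p pzu Suc in auto)
    finally show ?thesis by simp
  qed
  then show ?case using H by blast
qed




lemma box_in_open:
  assumes "open U" "(z::complex, u::real) \<in> U"
  obtains \<rho> where "\<rho> > 0" "cball z \<rho> \<times> cball u \<rho> \<subseteq> U"
proof -
  obtain e where e: "e > 0" "ball (z, u) e \<subseteq> U" using assms open_contains_ball by blast
  have "cball z (e/3) \<times> cball u (e/3) \<subseteq> U"
  proof
    fix q assume "q \<in> cball z (e/3) \<times> cball u (e/3)"
    then obtain a b where q: "q = (a, b)" "dist z a \<le> e/3" "dist u b \<le> e/3" by auto
    have "dist (z, u) (a, b) \<le> dist z a + dist u b"
      unfolding dist_norm using norm_Pair_le[of "z - a" "u - b"] by simp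
    then have "dist (z, u) q < e" using q e by simp
    then show "q \<in> U" using e by auto
  qed
  then show ?thesis using e by (intro that[of "e/3"]) auto
qed

lemma holo_u_deriv:
  assumes oU: "open U" and cGu: "continuous_on U Gu"
    and dG: "\<And>\<xi> t. (\<xi>, t) \<in> U \<Longrightarrow> ((\<lambda>s. G (\<xi>, s)) has_vector_derivative Gu (\<xi>, t)) (at t)"
    and hG: "\<And>t. (\<lambda>\<xi>. G (\<xi>, t)) holomorphic_on {\<xi>. (\<xi>, t) \<in> U}"
    and zu: "(z, u) \<in> U"
  shows "(\<lambda>\<xi>. Gu (\<xi>, u)) field_differentiable (at z)"
proof -
  obtain \<rho> where \<rho>: "\<rho> > 0" "cball z \<rho> \<times> cball u \<rho> \<subseteq> U" using box_in_open[OF oU zu] by blast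
  define K where "K = cball z \<rho> \<times> cball u \<rho>"
  have "compact K" unfolding K_def by (intro compact_Times compact_cball)
  then have uc: "uniformly_continuous_on K Gu"
    using compact_uniformly_continuous continuous_on_subset[OF cGu] \<rho>(2) K_def by blast
  define Fn where "Fn = (\<lambda>t::real. \<lambda>\<xi>. (G (\<xi>, u + t) - G (\<xi>, u)) / of_real t)"
  have hol: "Fn t holomorphic_on cball z \<rho>" if "\<bar>t\<bar> \<le> \<rho>" "t \<noteq> 0" for t
  proof -
    have s1: "cball z \<rho> \<subseteq> {\<xi>. (\<xi>, u + t) \<in> U}" "cball z \<rho> \<subseteq> {\<xi>. (\<xi>, u) \<in> U}"
      using \<rho> that by (auto simp: dist_real_def)
    show ?thesis unfolding Fn_def
      by (intro holomorphic_intros holomorphic_on_subset[OF hG s1(1)] holomorphic_on_subset[OF hG s1(2)]) (use that in auto)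
  qed
  have ev: "eventually (\<lambda>t. continuous_on (cball z \<rho>) (Fn t) \<and> Fn t holomorphic_on ball z \<rho>) (at (0::real))"
  proof -
    have "eventually (\<lambda>t. t \<in> ball 0 \<rho>) (at (0::real))"
      using \<rho>(1) by (intro eventually_at_in_open') auto
    moreover have "eventually (\<lambda>t. t \<noteq> 0) (at (0::real))" by (simp add: eventually_at_filter)
    ultimately have "eventually (\<lambda>t. t \<in> ball 0 \<rho> \<and> t \<noteq> 0) (at (0::real))"
      by eventually_elim auto
    then show ?thesis
      by (rule eventually_mono) (use hol in \<open>auto simp: holomorphic_on_imp_continuous_on holomorphic_on_subset[OF _ ball_subset_cball]\<close>)
  qed
  have ul: "uniform_limit (cball z \<rho>) Fn (\<lambda>\<xi>. Gu (\<xi>, u)) (at 0)"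
    unfolding uniform_limit_iff
  proof (intro allI impI)
    fix e :: real assume e: "e > 0"
    obtain d where d: "d > 0" "\<And>x x'. x \<in> K \<Longrightarrow> x' \<in> K \<Longrightarrow> dist x' x < d \<Longrightarrow> dist (Gu x') (Gu x) < e/2"
      using uc e unfolding uniformly_continuous_on_def by (meson half_gt_zero)
    have "eventually (\<lambda>t. t \<in> ball 0 (min \<rho> d)) (at (0::real))"
      using \<rho>(1) d(1) by (intro eventually_at_in_open') auto
    moreover have "eventually (\<lambda>t. t \<noteq> 0) (at (0::real))" by (simp add: eventually_at_filter)
    ultimately show "eventually (\<lambda>t. \<forall>\<xi>\<in>cball z \<rho>. dist (Fn t \<xi>) (Gu (\<xi>, u)) < e) (at 0)"
    proof eventually_elim
      case (elim t)
      then have t: "\<bar>t\<bar> < \<rho>" "\<bar>t\<bar> < d" "t \<noteq> 0" by auto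
      show ?case
      proof
        fix \<xi> assume \<xi>: "\<xi> \<in> cball z \<rho>"
        define S where "S = closed_segment u (u + t)"
        have Ssub: "\<And>s. s \<in> S \<Longrightarrow> \<bar>s - u\<bar> \<le> \<bar>t\<bar>"
          unfolding S_def using segment_bound[of _ u "u+t"] by (auto simp: dist_real_def)
        have inK: "\<And>s. s \<in> S \<Longrightarrow> (\<xi>, s) \<in> K"
          using Ssub t \<xi> unfolding K_def by (force simp: dist_real_def)
        have "norm (G (\<xi>, u + t) - G (\<xi>, u) - (u + t - u) *\<^sub>R Gu (\<xi>, u)) \<le> norm (u + t - u) * (e/2)"
        proof (rule vector_differentiable_bound_linearization[where S=S and f="\<lambda>s. G (\<xi>, s)"])
          show "((\<lambda>s. G (\<xi>, s)) has_vector_derivative Gu (\<xi>, x)) (at x within S)" if "x \<in> S" for x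
          proof -
            have "(\<xi>, x) \<in> U" using inK[OF that] \<rho>(2) K_def by auto
            then show ?thesis using dG has_vector_derivative_at_within by blast
          qed
          show "closed_segment u (u + t) \<subseteq> S" by (simp add: S_def)
          show "u \<in> S" by (simp add: S_def)
          show "norm (Gu (\<xi>, x) - Gu (\<xi>, u)) \<le> e / 2" if "x \<in> S" for x
          proof -
            have dd: "dist (\<xi>, x) (\<xi>, u) < d" using Ssub[OF that] t by (simp add: dist_Pair_Pair dist_real_def)
            have "u \<in> S" by (simp add: S_def)
            from d(2)[OF inK[OF this] inK[OF that] dd]
            show ?thesis by (simp add: dist_norm)
          qed
        qed
        then have "norm (G (\<xi>, u + t) - G (\<xi>, u) - of_real t * Gu (\<xi>, u)) \<le> \<bar>t\<bar> * (e/2)"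
          by (simp add: scaleR_conv_of_real)
        then have "norm ((G (\<xi>, u + t) - G (\<xi>, u) - of_real t * Gu (\<xi>, u)) / of_real t) \<le> e/2"
          using t by (simp add: norm_divide divide_le_eq mult.commute)
        moreover have "(G (\<xi>, u + t) - G (\<xi>, u) - of_real t * Gu (\<xi>, u)) / of_real t = Fn t \<xi> - Gu (\<xi>, u)"
          using t by (simp add: Fn_def field_simps)
        ultimately show "dist (Fn t \<xi>) (Gu (\<xi>, u)) < e" using e by (simp add: dist_norm)
      qed
    qed
  qed
  obtain "(\<lambda>\<xi>. Gu (\<xi>, u)) holomorphic_on ball z \<rho>"
    using holomorphic_uniform_limit[OF ev ul] by auto
  then show ?thesis using \<rho>(1) holomorphic_on_imp_differentiable_at by auto
qed




lemma frechet:
  assumes oU: "open U"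
    and dz: "\<And>\<xi> t. (\<xi>, t) \<in> U \<Longrightarrow> ((\<lambda>\<xi>. G (\<xi>, t)) has_field_derivative Gz (\<xi>, t)) (at \<xi>)"
    and cGz: "continuous_on U Gz"
    and du: "\<And>\<xi> t. (\<xi>, t) \<in> U \<Longrightarrow> ((\<lambda>s. G (\<xi>, s)) has_vector_derivative Gu (\<xi>, t)) (at t)"
    and zu: "(z, u) \<in> U"
  shows "(G has_derivative (\<lambda>x. Gz (z, u) * fst x + snd x *\<^sub>R Gu (z, u))) (at (z, u))"
  unfolding has_derivative_at_alt
proof (intro conjI allI impI)
  show "bounded_linear (\<lambda>x. Gz (z, u) * fst x + snd x *\<^sub>R Gu (z, u))"
    by (intro bounded_linear_intros)
  fix e :: real assume e: "e > 0"
  obtain d0 where d0: "d0 > 0" "ball (z, u) d0 \<subseteq> U" using oU zu open_contains_ball by blast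
  obtain d1 where d1: "d1 > 0" "\<And>y. y \<in> U \<Longrightarrow> dist y (z, u) < d1 \<Longrightarrow> dist (Gz y) (Gz (z, u)) < e/2"
    using cGz zu oU e unfolding continuous_on_iff by (meson half_gt_zero)
  have "((\<lambda>s. G (z, s)) has_derivative (\<lambda>h. h *\<^sub>R Gu (z, u))) (at u)"
    using du[OF zu] by (simp add: has_vector_derivative_def)
  then obtain d2 where d2: "d2 > 0" "\<And>s. norm (s - u) < d2 \<Longrightarrow>
      norm (G (z, s) - G (z, u) - (s - u) *\<^sub>R Gu (z, u)) \<le> e/2 * norm (s - u)"
    unfolding has_derivative_at_alt using e by (meson half_gt_zero)
  define d where "d = min d0 (min d1 d2) / 2"
  have d: "d > 0" "2 * d \<le> d0" "2 * d \<le> d1" "d \<le> d2" using d0 d1 d2 by (auto simp: d_def)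
  show "\<exists>d>0. \<forall>y. norm (y - (z, u)) < d \<longrightarrow>
     norm (G y - G (z, u) - (Gz (z, u) * fst (y - (z, u)) + snd (y - (z, u)) *\<^sub>R Gu (z, u))) \<le> e * norm (y - (z, u))"
  proof (intro exI[of _ d] conjI allI impI)
    show "d > 0" by fact
    fix y assume y: "norm (y - (z, u)) < d"
    obtain \<xi> s where ys: "y = (\<xi>, s)" by fastforce
    have n1: "norm (\<xi> - z) \<le> norm (y - (z, u))" "norm (s - u) \<le> norm (y - (z, u))"
      using norm_fst_le[of "\<xi> - z" "s - u"] norm_snd_le[of "s - u" "\<xi> - z"] by (auto simp: ys)
    have sb: "norm (s - u) < d" using n1 y by simp
    have A: "norm ((G (\<xi>, s) - Gz (z, u) * \<xi>) - (G (z, s) - Gz (z, u) * z)) \<le> e/2 * norm (\<xi> - z)"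
    proof (rule field_differentiable_bound[where S="ball z d"])
      show "convex (ball z d)" by simp
      show "\<xi> \<in> ball z d" using n1 y by (simp add: dist_norm norm_minus_commute)
      show "z \<in> ball z d" using d by simp
      fix w assume w: "w \<in> ball z d"
      have dw: "dist (w, s) (z, u) < 2 * d"
      proof -
        have "dist (w, s) (z, u) \<le> dist w z + dist s u"
          unfolding dist_norm using norm_Pair_le[of "w - z" "s - u"] by simp
        also have "\<dots> < 2 * d" using w sb by (simp add: dist_norm norm_minus_commute)
        finally show ?thesis .
      qed
      then have wU: "(w, s) \<in> U" using d0 d by (auto simp: dist_commute)
      show "((\<lambda>w. G (w, s) - Gz (z, u) * w) has_field_derivative (Gz (w, s) - Gz (z, u))) (at w within ball z d)"
        by (auto intro!: derivative_eq_intros DERIV_subset[OF dz[OF wU]])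
      show "norm (Gz (w, s) - Gz (z, u)) \<le> e/2"
        using d1(2)[OF wU] dw d by (simp add: dist_norm)
    qed
    have B: "norm (G (z, s) - G (z, u) - (s - u) *\<^sub>R Gu (z, u)) \<le> e/2 * norm (s - u)"
      using d2(2) sb d by simp
    have eq: "G y - G (z, u) - (Gz (z, u) * fst (y - (z, u)) + snd (y - (z, u)) *\<^sub>R Gu (z, u))
       = ((G (\<xi>, s) - Gz (z, u) * \<xi>) - (G (z, s) - Gz (z, u) * z)) + (G (z, s) - G (z, u) - (s - u) *\<^sub>R Gu (z, u))"
      by (simp add: ys algebra_simps)
    have "norm (G y - G (z, u) - (Gz (z, u) * fst (y - (z, u)) + snd (y - (z, u)) *\<^sub>R Gu (z, u)))
       \<le> e/2 * norm (\<xi> - z) + e/2 * norm (s - u)"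
      unfolding eq by (rule order_trans[OF norm_triangle_ineq add_mono[OF A B]])
    also have "\<dots> \<le> e/2 * norm (y - (z, u)) + e/2 * norm (y - (z, u))"
      using n1 e by (intro add_mono mult_left_mono) auto
    finally show "norm (G y - G (z, u) - (Gz (z, u) * fst (y - (z, u)) + snd (y - (z, u)) *\<^sub>R Gu (z, u))) \<le> e * norm (y - (z, u))"
      by simp
  qed
qed

lemma curve_chain:
  assumes oU: "open U"
    and dz: "\<And>\<xi> t. (\<xi>, t) \<in> U \<Longrightarrow> ((\<lambda>\<xi>. G (\<xi>, t)) has_field_derivative Gz (\<xi>, t)) (at \<xi>)"
    and cGz: "continuous_on U Gz"
    and du: "\<And>\<xi> t. (\<xi>, t) \<in> U \<Longrightarrow> ((\<lambda>s. G (\<xi>, s)) has_vector_derivative Gu (\<xi>, t)) (at t)"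
    and dzeta: "(\<zeta> has_vector_derivative \<zeta>') (at u)"
    and zu: "(\<zeta> u, u) \<in> U"
  shows "((\<lambda>s. G (\<zeta> s, s)) has_vector_derivative (Gz (\<zeta> u, u) * \<zeta>' + Gu (\<zeta> u, u))) (at u)"
proof -
  have c: "((\<lambda>s. (\<zeta> s, s)) has_derivative (\<lambda>h. h *\<^sub>R (\<zeta>', 1))) (at u)"
    using has_vector_derivative_Pair[OF dzeta has_vector_derivative_id[of "at u"]]
    by (simp add: has_vector_derivative_def)
  have "(G has_derivative (\<lambda>x. Gz (\<zeta> u, u) * fst x + snd x *\<^sub>R Gu (\<zeta> u, u))) (at ((\<lambda>s. (\<zeta> s, s)) u))"
    using frechet[OF oU dz cGz du zu] by simp
  from diff_chain_at[OF c this]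
  have "((\<lambda>s. G (\<zeta> s, s)) has_derivative (\<lambda>h. h *\<^sub>R (Gz (\<zeta> u, u) * \<zeta>' + Gu (\<zeta> u, u)))) (at u)"
    by (simp add: o_def scaleR_conv_of_real algebra_simps)
  then show ?thesis by (simp add: has_vector_derivative_def)
qed




abbreviation EE :: "real \<Rightarrow> real \<Rightarrow> complex" where
  "EE lam t \<equiv> exp (\<i> * complex_of_real (lam * t))"

lemma EE_vd: "((\<lambda>t. EE lam t) has_vector_derivative (\<i> * of_real lam * EE lam t)) (at t)"
proof -
  have "((\<lambda>w. exp (\<i> * of_real lam * w)) has_field_derivative (\<i> * of_real lam * exp (\<i> * of_real lam * of_real t))) (at (of_real t))"
    by (auto intro!: derivative_eq_intros)
  from has_vector_derivative_real_field[OF this] show ?thesis by (simp add: mult.assoc)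
qed

lemma EE_nz: "EE lam t \<noteq> 0" by simp

lemma smooth_on_vd:
  assumes "smooth_on S h" "t \<in> S"
  shows "(h has_vector_derivative iter_dd [1] h t) (at t)"
proof (rule shift_vd)
  have "((\<lambda>s. iter_dd [] h (t + s *\<^sub>R 1)) has_vector_derivative iter_dd [1] h t) (at 0)"
    using assms unfolding smooth_on_def by blast
  then show "((\<lambda>s. h (t + s)) has_vector_derivative iter_dd [1] h t) (at 0)" by simp
qed




lemma pz_local:
  assumes "open V" "(\<xi>, t) \<in> V" "\<And>\<eta>. (\<eta>, t) \<in> V \<Longrightarrow> \<Phi> (\<eta>, t) = \<Psi> \<eta>"
    "(\<Psi> has_field_derivative D) (at \<xi>)"
  shows "pz \<Phi> (\<xi>, t) = D"
proof -
  have "((\<lambda>\<eta>. \<Phi> (\<eta>, t)) has_field_derivative D) (at \<xi>)"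
    by (rule has_field_derivative_transform_within_open[OF assms(4) open_slice_z[OF assms(1), of t]])
       (use assms(2,3) in auto)
  then show ?thesis unfolding pz_def by (simp add: DERIV_imp_deriv)
qed

lemma hcomp:
  assumes "H holomorphic_on W" "open W" "\<xi> * E - c \<in> W"
  shows "((\<lambda>\<xi>. H (\<xi> * E - c)) has_field_derivative deriv H (\<xi> * E - c) * E) (at \<xi>)"
proof -
  have "(H has_field_derivative deriv H (\<xi> * E - c)) (at (\<xi> * E - c))"
    using assms by (simp add: DERIV_deriv_iff_field_differentiable holomorphic_on_imp_differentiable_at)
  moreover have "((\<lambda>\<xi>. \<xi> * E - c) has_field_derivative E) (at \<xi>)"
    by (auto intro!: derivative_eq_intros)
  ultimately show ?thesis by (rule DERIV_chain2)
qed

lemma dir_back: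
  fixes lam :: real and U :: "(complex \<times> real) set" and f :: "complex \<times> real \<Rightarrow> complex"
  assumes oU: "open U"
    and nz2: "\<And>p. p \<in> U \<Longrightarrow> pz (pz f) p \<noteq> 0"
    and zu: "(z, u) \<in> V" and oV: "open V" and VU: "V \<subseteq> U" and oW: "open W" and hF: "F holomorphic_on W"
    and F3nz: "\<forall>w\<in>W. (deriv ^^ 3) F w \<noteq> 0"
    and sh: "smooth_on (snd ` V) h"
    and rep: "\<forall>(z, u)\<in>V. z * exp (\<i> * complex_of_real (lam * u)) - h u \<in> W \<and>
           f (z, u) = F (z * exp (\<i> * complex_of_real (lam * u)) - h u) + A1 u * z + A0 u"
  shows "pz (\<lambda>q. psi f q / phi f q) (z, u) = \<i> * complex_of_real lam * (pz (\<lambda>q. 2 / phi f q) (z, u) + 1)"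
proof -
  define F1 where "F1 = deriv F"
  define F2 where "F2 = deriv F1"
  define F3 where "F3 = deriv F2"
  have hF1: "F1 holomorphic_on W" unfolding F1_def using hF oW by (rule holomorphic_deriv)
  have hF2: "F2 holomorphic_on W" unfolding F2_def using hF1 oW by (rule holomorphic_deriv)
  have hF3: "F3 holomorphic_on W" unfolding F3_def using hF2 oW by (rule holomorphic_deriv)
  have F3nz': "\<And>w. w \<in> W \<Longrightarrow> F3 w \<noteq> 0" using F3nz by (simp add: F3_def F2_def F1_def eval_nat_numeral)
  define \<gamma> where "\<gamma> = (\<lambda>t \<xi>. \<xi> * EE lam t - h t)"
  have inW: "\<And>\<xi> t. (\<xi>, t) \<in> V \<Longrightarrow> \<gamma> t \<xi> \<in> W" using rep by (auto simp: \<gamma>_def)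
  have frep: "\<And>\<xi> t. (\<xi>, t) \<in> V \<Longrightarrow> f (\<xi>, t) = F (\<gamma> t \<xi>) + A1 t * \<xi> + A0 t" using rep by (auto simp: \<gamma>_def)
  have w: "\<xi> * EE lam t - h t \<in> W" if "(\<xi>, t) \<in> V" for \<xi> t
    using inW[OF that] by (simp only: \<gamma>_def)
  have a: "pz f (\<xi>, t) = F1 (\<gamma> t \<xi>) * EE lam t + A1 t" if "(\<xi>, t) \<in> V" for \<xi> t
  proof (rule pz_local[OF oV that, of _ "\<lambda>\<eta>. F (\<gamma> t \<eta>) + A1 t * \<eta> + A0 t"], rule frep)
    have "((\<lambda>\<eta>. F (\<eta> * EE lam t - h t)) has_field_derivative F1 (\<xi> * EE lam t - h t) * EE lam t) (at \<xi>)"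
      unfolding F1_def by (rule hcomp[OF hF oW w[OF that]])
    then have "((\<lambda>\<eta>. F (\<eta> * EE lam t - h t) + A1 t * \<eta> + A0 t) has_field_derivative F1 (\<xi> * EE lam t - h t) * EE lam t + A1 t * 1 + 0) (at \<xi>)"
      by (intro DERIV_add DERIV_cmult DERIV_ident DERIV_const)
    then show "((\<lambda>\<eta>. F (\<gamma> t \<eta>) + A1 t * \<eta> + A0 t) has_field_derivative F1 (\<gamma> t \<xi>) * EE lam t + A1 t) (at \<xi>)"
      by (simp only: \<gamma>_def mult_1_right add_0_right)
  qed
  have b: "pz (pz f) (\<xi>, t) = F2 (\<gamma> t \<xi>) * (EE lam t * EE lam t)" if "(\<xi>, t) \<in> V" for \<xi> t
  proof (rule pz_local[OF oV that, of _ "\<lambda>\<eta>. F1 (\<gamma> t \<eta>) * EE lam t + A1 t"], rule a)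
    have "((\<lambda>\<eta>. F1 (\<eta> * EE lam t - h t)) has_field_derivative F2 (\<xi> * EE lam t - h t) * EE lam t) (at \<xi>)"
      unfolding F2_def by (rule hcomp[OF hF1 oW w[OF that]])
    then have "((\<lambda>\<eta>. F1 (\<eta> * EE lam t - h t) * EE lam t + A1 t) has_field_derivative F2 (\<xi> * EE lam t - h t) * EE lam t * EE lam t + 0) (at \<xi>)"
      by (intro DERIV_add DERIV_cmult_right DERIV_const)
    then show "((\<lambda>\<eta>. F1 (\<gamma> t \<eta>) * EE lam t + A1 t) has_field_derivative F2 (\<gamma> t \<xi>) * (EE lam t * EE lam t)) (at \<xi>)"
      by (simp only: \<gamma>_def add_0_right mult.assoc)
  qed
  have c: "pz (pz (pz f)) (\<xi>, t) = F3 (\<gamma> t \<xi>) * (EE lam t * EE lam t * EE lam t)" if "(\<xi>, t) \<in> V" for \<xi> t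
  proof (rule pz_local[OF oV that, of _ "\<lambda>\<eta>. F2 (\<gamma> t \<eta>) * (EE lam t * EE lam t)"], rule b)
    have "((\<lambda>\<eta>. F2 (\<eta> * EE lam t - h t)) has_field_derivative F3 (\<xi> * EE lam t - h t) * EE lam t) (at \<xi>)"
      unfolding F3_def by (rule hcomp[OF hF2 oW w[OF that]])
    then have "((\<lambda>\<eta>. F2 (\<eta> * EE lam t - h t) * (EE lam t * EE lam t)) has_field_derivative F3 (\<xi> * EE lam t - h t) * EE lam t * (EE lam t * EE lam t)) (at \<xi>)"
      by (intro DERIV_cmult_right)
    then show "((\<lambda>\<eta>. F2 (\<gamma> t \<eta>) * (EE lam t * EE lam t)) has_field_derivative F3 (\<gamma> t \<xi>) * (EE lam t * EE lam t * EE lam t)) (at \<xi>)"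
      by (simp only: \<gamma>_def mult.assoc)
  qed
  define hd where "hd = iter_dd [1] h u"
  have dh: "(h has_vector_derivative hd) (at u)"
    unfolding hd_def by (rule smooth_on_vd[OF sh]) (use zu in force)
  have d: "pu (pz (pz f)) (\<xi>, u) = F3 (\<gamma> u \<xi>) * (\<xi> * (\<i> * of_real lam * EE lam u) - hd) * (EE lam u * EE lam u)
        + F2 (\<gamma> u \<xi>) * (2 * \<i> * of_real lam * (EE lam u * EE lam u))" if "(\<xi>, u) \<in> V" for \<xi>
  proof -
    have dg: "((\<lambda>s. \<xi> * EE lam s - h s) has_vector_derivative (\<xi> * (\<i> * of_real lam * EE lam u) - hd)) (at u)"
      by (intro derivative_intros EE_vd dh)
    have "(F2 has_field_derivative F3 (\<gamma> u \<xi>)) (at ((\<lambda>s. \<xi> * EE lam s - h s) u))"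
      using hF2 oW inW[OF that] unfolding F3_def \<gamma>_def
      by (simp add: DERIV_deriv_iff_field_differentiable holomorphic_on_imp_differentiable_at)
    from field_vector_diff_chain_at[OF dg this]
    have d1: "((\<lambda>s. F2 (\<gamma> s \<xi>)) has_vector_derivative ((\<xi> * (\<i> * of_real lam * EE lam u) - hd) * F3 (\<gamma> u \<xi>))) (at u)"
      by (simp add: o_def \<gamma>_def)
    have d2: "((\<lambda>s. F2 (\<gamma> s \<xi>) * (EE lam s * EE lam s)) has_vector_derivative
       (F2 (\<gamma> u \<xi>) * (EE lam u * (\<i> * of_real lam * EE lam u) + (\<i> * of_real lam * EE lam u) * EE lam u)
        + (\<xi> * (\<i> * of_real lam * EE lam u) - hd) * F3 (\<gamma> u \<xi>) * (EE lam u * EE lam u))) (at u)"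
      by (intro has_vector_derivative_mult d1 EE_vd)
    have sl: "open {s. (\<xi>, s) \<in> V}" by (rule open_slice_u[OF oV])
    have "((\<lambda>s. pz (pz f) (\<xi>, s)) has_vector_derivative
       (F2 (\<gamma> u \<xi>) * (EE lam u * (\<i> * of_real lam * EE lam u) + (\<i> * of_real lam * EE lam u) * EE lam u)
        + (\<xi> * (\<i> * of_real lam * EE lam u) - hd) * F3 (\<gamma> u \<xi>) * (EE lam u * EE lam u))) (at u)"
      by (rule has_vector_derivative_transform_within_open[OF d2 sl]) (use that b in auto)
    then show ?thesis unfolding pu_def by (simp add: vector_derivative_at algebra_simps)
  qed
  define Vu where "Vu = {\<xi>. (\<xi>, u) \<in> V}"
  have oVu: "open Vu" unfolding Vu_def by (rule open_slice_z[OF oV])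
  have zVu: "z \<in> Vu" using zu by (simp add: Vu_def)
  define D2 where "D2 = (\<lambda>\<xi>. 2 * F2 (\<gamma> u \<xi>) / (F3 (\<gamma> u \<xi>) * EE lam u))"
  have F2nz: "F2 (\<gamma> u \<xi>) \<noteq> 0" if "\<xi> \<in> Vu" for \<xi>
    using nz2[of "(\<xi>, u)"] b[of \<xi> u] that VU by (auto simp: Vu_def)
  have F3nz'': "F3 (\<gamma> u \<xi>) \<noteq> 0" if "\<xi> \<in> Vu" for \<xi>
    using F3nz' inW that by (auto simp: Vu_def)
  have eq1: "2 / phi f (\<xi>, u) = D2 \<xi>" if "\<xi> \<in> Vu" for \<xi>
    using that F2nz[OF that] F3nz''[OF that]
    by (simp add: phi_def D2_def b c Vu_def field_simps)
  have eq2: "psi f (\<xi>, u) / phi f (\<xi>, u) = \<i> * of_real lam * \<xi> - hd / EE lam u + \<i> * of_real lam * D2 \<xi>"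
    if "\<xi> \<in> Vu" for \<xi>
    using that F2nz[OF that] F3nz''[OF that]
    by (simp add: phi_def psi_def D2_def b c d Vu_def field_simps)
  have hD2: "D2 holomorphic_on Vu"
  proof -
    have m: "\<gamma> u ` Vu \<subseteq> W" using inW by (auto simp: Vu_def)
    have "(\<lambda>\<xi>. \<gamma> u \<xi>) holomorphic_on Vu" unfolding \<gamma>_def by (intro holomorphic_intros)
    then have "(F2 \<circ> \<gamma> u) holomorphic_on Vu" "(F3 \<circ> \<gamma> u) holomorphic_on Vu"
      using holomorphic_on_compose_gen[OF _ hF2 m] holomorphic_on_compose_gen[OF _ hF3 m] by auto
    then show ?thesis unfolding D2_def using F3nz''
      by (intro holomorphic_intros) (auto simp: o_def)
  qed
  then have dD2: "(D2 has_field_derivative deriv D2 z) (at z)"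
    using oVu zVu by (simp add: DERIV_deriv_iff_field_differentiable holomorphic_on_imp_differentiable_at)
  have ev: "eventually (\<lambda>\<xi>. \<xi> \<in> Vu) (nhds z)" using oVu zVu by (rule eventually_nhds_in_open)
  have "pz (\<lambda>q. 2 / phi f q) (z, u) = deriv D2 z"
    unfolding pz_def by simp (rule deriv_cong_ev[OF eventually_mono[OF ev]], auto simp: eq1)
  moreover have "pz (\<lambda>q. psi f q / phi f q) (z, u) = \<i> * of_real lam + \<i> * of_real lam * deriv D2 z"
  proof -
    have "pz (\<lambda>q. psi f q / phi f q) (z, u) = deriv (\<lambda>\<xi>. \<i> * of_real lam * \<xi> - hd / EE lam u + \<i> * of_real lam * D2 \<xi>) z"
      unfolding pz_def by simp (rule deriv_cong_ev[OF eventually_mono[OF ev]], auto simp: eq2)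
    also have "\<dots> = \<i> * of_real lam + \<i> * of_real lam * deriv D2 z"
      by (rule DERIV_imp_deriv) (auto intro!: derivative_eq_intros dD2)
    finally show ?thesis .
  qed
  ultimately show ?thesis by (simp add: algebra_simps)
qed




lemma Ck_subset: "Ck n S g \<Longrightarrow> T \<subseteq> S \<Longrightarrow> Ck n T g"
proof (induction n arbitrary: g)
  case (Suc n)
  then obtain g' where "\<forall>x\<in>S. (g has_vector_derivative g' x) (at x)" "Ck n S g'" by auto
  then show ?case using Suc by auto
qed simp

lemma sm_subset: "sm S g \<Longrightarrow> T \<subseteq> S \<Longrightarrow> sm T g"
  unfolding sm_def using Ck_subset by blast



lemma affine_from_d2:
  fixes K :: "complex \<Rightarrow> complex"
  assumes "convex S" "\<And>x. x \<in> S \<Longrightarrow> (K has_field_derivative K1 x) (at x)"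
    "\<And>x. x \<in> S \<Longrightarrow> (K1 has_field_derivative 0) (at x)" "a \<in> S" "x \<in> S"
  shows "K x = K a + K1 a * (x - a)"
proof -
  obtain c where c: "\<And>y. y \<in> S \<Longrightarrow> K1 y = c"
    using has_field_derivative_zero_constant[OF assms(1), of K1] assms(3) has_field_derivative_at_within
    by blast
  have "\<And>y. y \<in> S \<Longrightarrow> ((\<lambda>y. K y - c * y) has_field_derivative 0) (at y within S)"
  proof -
    fix y assume y: "y \<in> S"
    have "((\<lambda>y. K y - c * y) has_field_derivative K1 y - c * 1) (at y)"
      by (intro DERIV_diff DERIV_cmult DERIV_ident assms(2) y)
    then show "((\<lambda>y. K y - c * y) has_field_derivative 0) (at y within S)"
      using c[OF y] by (simp add: has_field_derivative_at_within)
  qed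
  then obtain d where d: "\<And>y. y \<in> S \<Longrightarrow> K y - c * y = d"
    using has_field_derivative_zero_constant[OF assms(1), of "\<lambda>y. K y - c * y"] by blast
  have "K x = d + c * x" "K a = d + c * a" using d[OF assms(5)] d[OF assms(4)] by (simp_all add: algebra_simps)
  then show ?thesis using c[OF assms(4)] by (simp add: algebra_simps)
qed



lemma primitive_interval:
  fixes k :: "real \<Rightarrow> complex"
  assumes "continuous_on {a..b} k"
  shows "\<exists>h. \<forall>x\<in>{a<..<b}. (h has_vector_derivative k x) (at x)"
proof -
  have "\<forall>x\<in>{a<..<b}. ((\<lambda>u. integral {a..u} k) has_vector_derivative k x) (at x)"
  proof
    fix x assume x: "x \<in> {a<..<b}"
    have xab: "x \<in> {a..b}" using x by simp
    have "((\<lambda>u. integral {a..u} k) has_vector_derivative k x) (at x within {a..b})"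
      by (rule integral_has_vector_derivative[OF assms xab])
    then have "((\<lambda>u. integral {a..u} k) has_vector_derivative k x) (at x within {a<..<b})"
      by (rule has_vector_derivative_within_subset) (rule greaterThanLessThan_subseteq_atLeastAtMost_iff[THEN iffD2], simp)
    moreover have "at x within {a<..<b} = at x"
      by (rule at_within_open[OF x open_greaterThanLessThan])
    ultimately show "((\<lambda>u. integral {a..u} k) has_vector_derivative k x) (at x)"
      by simp
  qed
  then show ?thesis by blast
qed




locale setupf =
  fixes U :: "(complex \<times> real) set" and f :: "complex \<times> real \<Rightarrow> complex"
  assumes oU: "open U" and sf: "smooth_on U f"
    and hol: "\<And>u. (\<lambda>z. f (z, u)) holomorphic_on {z. (z, u) \<in> U}"
    and nz2: "\<And>p. p \<in> U \<Longrightarrow> pz (pz f) p \<noteq> 0"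
    and nz3: "\<And>p. p \<in> U \<Longrightarrow> pz (pz (pz f)) p \<noteq> 0"
begin

definition "Gu = iter_dd [(0,1),(1,0),(1,0)] f"

lemma it1: "p \<in> U \<Longrightarrow> iter_dd [(1,0)] f p = pz f p"
  using pz_iter[OF oU hol, of 1] by simp

lemma it2: "p \<in> U \<Longrightarrow> iter_dd [(1,0),(1,0)] f p = pz (pz f) p"
  using pz_iter[OF oU hol, of 2] by (simp add: eval_nat_numeral)

lemma it3: "p \<in> U \<Longrightarrow> iter_dd [(1,0),(1,0),(1,0)] f p = pz (pz (pz f)) p"
  using pz_iter[OF oU hol, of 3] by (simp add: eval_nat_numeral)

lemma hol1: "(\<lambda>\<xi>. pz f (\<xi>, u)) holomorphic_on {\<xi>. (\<xi>, u) \<in> U}"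
  using pz_iter[OF oU hol, of 1] by simp

lemma hol2: "(\<lambda>\<xi>. pz (pz f) (\<xi>, u)) holomorphic_on {\<xi>. (\<xi>, u) \<in> U}"
  using pz_iter[OF oU hol, of 2] by (simp add: eval_nat_numeral)

lemma hol3: "(\<lambda>\<xi>. pz (pz (pz f)) (\<xi>, u)) holomorphic_on {\<xi>. (\<xi>, u) \<in> U}"
  using pz_iter[OF oU hol, of 3] by (simp add: eval_nat_numeral)

lemma dz0: "(\<xi>, t) \<in> U \<Longrightarrow> ((\<lambda>\<xi>. f (\<xi>, t)) has_field_derivative pz f (\<xi>, t)) (at \<xi>)"
  using hol[of t] open_slice_z[OF oU, of t] unfolding pz_def
  by (simp add: DERIV_deriv_iff_field_differentiable holomorphic_on_imp_differentiable_at)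

lemma dz1: "(\<xi>, t) \<in> U \<Longrightarrow> ((\<lambda>\<xi>. pz f (\<xi>, t)) has_field_derivative pz (pz f) (\<xi>, t)) (at \<xi>)"
  using hol1[of t] open_slice_z[OF oU, of t] unfolding pz_def[of "pz f"]
  by (simp add: DERIV_deriv_iff_field_differentiable holomorphic_on_imp_differentiable_at)

lemma dz2: "(\<xi>, t) \<in> U \<Longrightarrow> ((\<lambda>\<xi>. pz (pz f) (\<xi>, t)) has_field_derivative pz (pz (pz f)) (\<xi>, t)) (at \<xi>)"
  using hol2[of t] open_slice_z[OF oU, of t] unfolding pz_def[of "pz (pz f)"]
  by (simp add: DERIV_deriv_iff_field_differentiable holomorphic_on_imp_differentiable_at)

lemma du2: "(\<xi>, t) \<in> U \<Longrightarrow> ((\<lambda>s. pz (pz f) (\<xi>, s)) has_vector_derivative Gu (\<xi>, t)) (at t)"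
proof -
  assume a: "(\<xi>, t) \<in> U"
  have "((\<lambda>s. iter_dd [(1,0),(1,0)] f (\<xi>, s)) has_vector_derivative Gu (\<xi>, t)) (at t)"
    unfolding Gu_def by (rule slice_deriv_u[OF sf a])
  then show ?thesis
    by (rule has_vector_derivative_transform_within_open[OF _ open_slice_u[OF oU]]) (use a it2 in auto)
qed

lemma pu_eq: "(\<xi>, t) \<in> U \<Longrightarrow> pu (pz (pz f)) (\<xi>, t) = Gu (\<xi>, t)"
  unfolding pu_def using du2 by (simp add: vector_derivative_at)

lemma cGu: "continuous_on U Gu"
  using sf unfolding smooth_on_def Gu_def by blast

lemma c3: "continuous_on U (pz (pz (pz f)))"
proof -
  have "continuous_on U (iter_dd [(1,0),(1,0),(1,0)] f)" using sf unfolding smooth_on_def by blast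
  then show ?thesis by (rule continuous_on_eq) (rule it3)
qed

lemma Gu_diff: "(z, u) \<in> U \<Longrightarrow> (\<lambda>\<xi>. Gu (\<xi>, u)) field_differentiable (at z)"
  by (rule holo_u_deriv[OF oU cGu du2 hol2])

end




lemma sm_cont: "sm S k \<Longrightarrow> open S \<Longrightarrow> continuous_on S k"
  using sm_vd(1) by (meson continuous_at_imp_continuous_on has_vector_derivative_continuous)

abbreviation Ei :: "real \<Rightarrow> real \<Rightarrow> complex" where
  "Ei lam t \<equiv> exp (- (\<i> * complex_of_real (lam * t)))"

lemma norm_Ei: "norm (Ei lam t) = 1"
proof -
  have "Ei lam t = exp (\<i> * complex_of_real (- (lam * t)))" by simp
  then show ?thesis using norm_exp_i_times by metis
qed

lemma EE_Ei: "EE lam t * Ei lam t = 1"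
  by (simp add: exp_minus)

lemma Ei_vd: "((\<lambda>t. Ei lam t) has_vector_derivative (- (\<i> * of_real lam) * Ei lam t)) (at t)"
proof -
  have "((\<lambda>w. exp (- (\<i> * of_real lam * w))) has_field_derivative (- (\<i> * of_real lam) * exp (- (\<i> * of_real lam * of_real t)))) (at (of_real t))"
    by (auto intro!: derivative_eq_intros)
  from has_vector_derivative_real_field[OF this] show ?thesis by (simp add: mult.assoc)
qed

context setupf begin

lemma dQ:
  assumes pde: "\<forall>p\<in>U. pz (\<lambda>q. psi f q / phi f q) p = \<i> * complex_of_real lam * (pz (\<lambda>q. 2 / phi f q) p + 1)"
    and xt: "(\<xi>, t) \<in> U"
  shows "((\<lambda>\<eta>. (Gu (\<eta>, t) / pz (pz f) (\<eta>, t) - 2 * (\<i> * of_real lam)) / (pz (pz (pz f)) (\<eta>, t) / pz (pz f) (\<eta>, t))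
            - \<i> * of_real lam * \<eta>) has_field_derivative 0) (at \<xi>)"
proof -
  define il where "il = \<i> * complex_of_real lam"
  define S where "S = {\<eta>. (\<eta>, t) \<in> U}"
  have oS: "open S" unfolding S_def by (rule open_slice_z[OF oU])
  have xS: "\<xi> \<in> S" using xt by (simp add: S_def)
  define a where "a = (\<lambda>\<eta>. (Gu (\<eta>, t) / pz (pz f) (\<eta>, t)) / (pz (pz (pz f)) (\<eta>, t) / pz (pz f) (\<eta>, t)))"
  define c where "c = (\<lambda>\<eta>. 2 / (pz (pz (pz f)) (\<eta>, t) / pz (pz f) (\<eta>, t)))"
  have hg: "(\<lambda>\<eta>. pz (pz f) (\<eta>, t)) field_differentiable (at \<xi>)"
    using dz2[OF xt] field_differentiable_def by blast
  have hg3: "(\<lambda>\<eta>. pz (pz (pz f)) (\<eta>, t)) field_differentiable (at \<xi>)"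
    using hol3[of t] oS xS unfolding S_def by (meson holomorphic_on_imp_differentiable_at)
  have hgu: "(\<lambda>\<eta>. Gu (\<eta>, t)) field_differentiable (at \<xi>)" by (rule Gu_diff[OF xt])
  have n2: "pz (pz f) (\<xi>, t) \<noteq> 0" and n3: "pz (pz (pz f)) (\<xi>, t) \<noteq> 0" using nz2 nz3 xt by auto
  have da: "a field_differentiable (at \<xi>)" unfolding a_def
    by (intro field_differentiable_divide hgu hg hg3 n2 n3) (use n2 n3 in auto)
  have dc: "c field_differentiable (at \<xi>)" unfolding c_def
    by (intro field_differentiable_divide field_differentiable_const hg hg3 n2 n3) (use n2 n3 in auto)
  have ev: "eventually (\<lambda>\<eta>. \<eta> \<in> S) (nhds \<xi>)" using oS xS by (rule eventually_nhds_in_open)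
  have ea: "\<eta> \<in> S \<Longrightarrow> psi f (\<eta>, t) / phi f (\<eta>, t) = a \<eta>" for \<eta>
    by (simp add: a_def psi_def phi_def pu_eq S_def)
  have ec: "\<eta> \<in> S \<Longrightarrow> 2 / phi f (\<eta>, t) = c \<eta>" for \<eta>
    by (simp add: c_def phi_def)
  have "deriv a \<xi> = il * (deriv c \<xi> + 1)"
  proof -
    have "deriv a \<xi> = pz (\<lambda>q. psi f q / phi f q) (\<xi>, t)"
      unfolding pz_def by simp (rule deriv_cong_ev[OF eventually_mono[OF ev]], auto simp: ea)
    moreover have "deriv c \<xi> = pz (\<lambda>q. 2 / phi f q) (\<xi>, t)"
      unfolding pz_def by simp (rule deriv_cong_ev[OF eventually_mono[OF ev]], auto simp: ec)
    ultimately show ?thesis using pde xt il_def by simp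
  qed
  moreover have "((\<lambda>\<eta>. a \<eta> - il * c \<eta> - il * \<eta>) has_field_derivative deriv a \<xi> - il * deriv c \<xi> - il * 1) (at \<xi>)"
    using da dc by (intro DERIV_diff DERIV_cmult DERIV_ident) (auto simp: DERIV_deriv_iff_field_differentiable)
  ultimately have D: "((\<lambda>\<eta>. a \<eta> - il * c \<eta> - il * \<eta>) has_field_derivative 0) (at \<xi>)"
    by (simp add: algebra_simps)
  show ?thesis
  proof (rule has_field_derivative_transform_within_open[OF D oS xS])
    fix \<eta> assume "\<eta> \<in> S"
    then have "pz (pz f) (\<eta>, t) \<noteq> 0" "pz (pz (pz f)) (\<eta>, t) \<noteq> 0" using nz2 nz3 by (auto simp: S_def)
    then show "a \<eta> - il * c \<eta> - il * \<eta> = (Gu (\<eta>, t) / pz (pz f) (\<eta>, t) - 2 * (\<i> * of_real lam)) / (pz (pz (pz f)) (\<eta>, t) / pz (pz f) (\<eta>, t))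
            - \<i> * of_real lam * \<eta>"
      by (simp add: a_def c_def il_def field_simps)
  qed
qed

end




lemma alg1: "(E::complex) * F = 1 \<Longrightarrow> (w + hh) * (- il * F) + (- cc * E) * F = - il * ((w + hh) * F) - cc"
proof -
  assume a: "E * F = 1"
  have "(w + hh) * (- il * F) + (- cc * E) * F = - il * ((w + hh) * F) - cc * (E * F)"
    by (simp add: algebra_simps)
  then show ?thesis using a by simp
qed

lemma alg2: "X = 2 * a * G \<Longrightarrow> G * (F * (- a * F) + (- a * F) * F) + X * (F * F) = (0::complex)"
  by (simp add: algebra_simps)

lemma alg3: "((1 - u) *\<^sub>R x + u *\<^sub>R y) * (E::complex) - hh = (1 - u) *\<^sub>R (x * E - hh) + u *\<^sub>R (y * E - hh)"
  by (simp add: scaleR_conv_of_real algebra_simps)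

lemma alg4: "(E::complex) * F = 1 \<Longrightarrow> G - G * (F * F) * E * E = 0"
proof -
  assume a: "E * F = 1"
  have "G * (F * F) * E * E = G * ((E * F) * (E * F))" by (simp add: algebra_simps)
  then show ?thesis using a by simp
qed

lemma alg5: "fz - Fz = (fz0 - Fz0) + a * (z - z0) \<Longrightarrow> (fz::complex) = Fz + a * z + (fz0 - Fz0 - a * z0)"
  by (simp add: algebra_simps)

context setupf begin

lemma dir_fwd:
  assumes pde: "\<forall>p\<in>U. pz (\<lambda>q. psi f q / phi f q) p = \<i> * complex_of_real lam * (pz (\<lambda>q. 2 / phi f q) p + 1)"
    and p0: "(z0, u0) \<in> U"
  shows "\<exists>V W F h A1 A0.
        open V \<and> (z0, u0) \<in> V \<and> V \<subseteq> U \<and>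
        open W \<and> F holomorphic_on W \<and>
        (\<forall>w\<in>W. (deriv ^^ 3) F w \<noteq> 0) \<and>
        smooth_on (snd ` V) (h :: real \<Rightarrow> complex) \<and>
        smooth_on (snd ` V) (A1 :: real \<Rightarrow> complex) \<and>
        smooth_on (snd ` V) (A0 :: real \<Rightarrow> complex) \<and>
        (\<forall>(z, u)\<in>V. z * exp (\<i> * complex_of_real (lam * u)) - h u \<in> W \<and>
           f (z, u) = F (z * exp (\<i> * complex_of_real (lam * u)) - h u) + A1 u * z + A0 u)"
proof -
  define il where "il = \<i> * complex_of_real lam"
  define g where "g = pz (pz f)"
  define g3 where "g3 = pz (pz (pz f))"
  obtain \<rho> where \<rho>: "\<rho> > 0" "cball z0 \<rho> \<times> cball u0 \<rho> \<subseteq> U" using box_in_open[OF oU p0] by blast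
  have boxU: "\<xi> \<in> cball z0 \<rho> \<Longrightarrow> t \<in> cball u0 \<rho> \<Longrightarrow> (\<xi>, t) \<in> U" for \<xi> t using \<rho> by auto
  define Q where "Q = (\<lambda>\<eta> t. (Gu (\<eta>, t) / g (\<eta>, t) - 2 * il) / (g3 (\<eta>, t) / g (\<eta>, t)) - il * \<eta>)"
  define c where "c = (\<lambda>t. Q z0 t)"
  have Qc: "Q \<xi> t = c t" if "\<xi> \<in> ball z0 \<rho>" "t \<in> cball u0 \<rho>" for \<xi> t
  proof -
    have "\<exists>k. \<forall>\<eta>\<in>ball z0 \<rho>. Q \<eta> t = k"
    proof (rule has_field_derivative_zero_constant)
      fix \<eta> assume "\<eta> \<in> ball z0 \<rho>"
      then have "(\<eta>, t) \<in> U" using boxU that(2) by auto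
      from dQ[OF pde this] show "((\<lambda>\<eta>. Q \<eta> t) has_field_derivative 0) (at \<eta> within ball z0 \<rho>)"
        unfolding Q_def g_def g3_def il_def by (rule has_field_derivative_at_within)
    qed simp
    then show ?thesis using that \<rho>(1) by (auto simp: c_def)
  qed
  have R: "Gu (\<xi>, t) = 2 * il * g (\<xi>, t) + (c t + il * \<xi>) * g3 (\<xi>, t)"
    if "\<xi> \<in> ball z0 \<rho>" "t \<in> cball u0 \<rho>" for \<xi> t
  proof -
    have U: "(\<xi>, t) \<in> U" using boxU that by auto
    have n: "g (\<xi>, t) \<noteq> 0" "g3 (\<xi>, t) \<noteq> 0" using nz2 nz3 U by (auto simp: g_def g3_def)
    have "Q \<xi> t = c t" by (rule Qc[OF that])
    then have "g (\<xi>, t) * Gu (\<xi>, t) = g (\<xi>, t) * (2 * il * g (\<xi>, t) + (c t + il * \<xi>) * g3 (\<xi>, t))"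
      using n unfolding Q_def by (simp add: field_simps)
    then show ?thesis using n(1) by simp
  qed
  define S0 where "S0 = {t. (z0, t) \<in> U}"
  have oS0: "open S0" unfolding S0_def by (rule open_slice_u[OF oU])
  have cbS0: "cball u0 \<rho> \<subseteq> S0" using boxU \<rho>(1) by (auto simp: S0_def)
  have smg: "sm S0 (\<lambda>t. g (z0, t))"
    unfolding S0_def by (rule sm_transfer[OF slice_sm[OF sf oU, of z0 "[(1,0),(1,0)]"] open_slice_u[OF oU]]) (unfold g_def mem_Collect_eq, erule it2)
  have smg3: "sm S0 (\<lambda>t. g3 (z0, t))"
    unfolding S0_def by (rule sm_transfer[OF slice_sm[OF sf oU, of z0 "[(1,0),(1,0),(1,0)]"] open_slice_u[OF oU]]) (unfold g3_def mem_Collect_eq, erule it3)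
  have smGu: "sm S0 (\<lambda>t. Gu (z0, t))"
    using slice_sm[OF sf oU, of z0 "[(0,1),(1,0),(1,0)]"] unfolding Gu_def S0_def .
  have n2: "\<And>t. t \<in> S0 \<Longrightarrow> g (z0, t) \<noteq> 0" and n3: "\<And>t. t \<in> S0 \<Longrightarrow> g3 (z0, t) \<noteq> 0"
    using nz2 nz3 by (auto simp: S0_def g_def g3_def)
  have smc: "sm S0 c"
    unfolding c_def Q_def
    by (intro sm_diff sm_divide sm_const smg smg3 smGu sm_mult n2 n3) (use n2 n3 in auto)
  have smEE: "sm S (\<lambda>t. EE lam t)" for S
    using sm_exp[of S "\<i> * of_real lam"] by (simp add: mult.assoc)
  define k where "k = (\<lambda>t. - c t * EE lam t)"
  have smk: "sm S0 k" unfolding k_def by (intro sm_mult smEE sm_diff[OF sm_const smc, of 0, simplified])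
  have "continuous_on {u0 - \<rho>..u0 + \<rho>} k"
  proof (rule continuous_on_subset[OF sm_cont[OF smk oS0]])
    show "{u0 - \<rho>..u0 + \<rho>} \<subseteq> S0" using cbS0 by (auto simp: dist_real_def subset_iff)
  qed
  then obtain h where hd: "\<forall>x\<in>{u0 - \<rho><..<u0 + \<rho>}. (h has_vector_derivative k x) (at x)"
    using primitive_interval by blast
  define I where "I = ball u0 \<rho>"
  have I_eq: "I = {u0 - \<rho><..<u0 + \<rho>}" unfolding I_def by (auto simp: dist_real_def)
  have hdI: "\<And>t. t \<in> I \<Longrightarrow> (h has_vector_derivative k t) (at t)" using hd I_eq by auto
  have IS0: "I \<subseteq> S0" using cbS0 by (auto simp: I_def)
  have smh: "sm I h" by (rule sm_primitive[OF sm_subset[OF smk IS0]]) (use hdI in auto)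
  have hcI: "continuous_on I h"
    by (meson continuous_at_imp_continuous_on has_vector_derivative_continuous hdI)
  have u0I: "u0 \<in> I" using \<rho>(1) by (simp add: I_def)
  define r where "r = \<rho> / 2"
  have r: "r > 0" using \<rho>(1) by (simp add: r_def)
  define w0 where "w0 = z0 * EE lam u0 - h u0"
  have "isCont (\<lambda>t. z0 * EE lam t - h t) u0"
    using hcI u0I unfolding I_def
    by (intro continuous_intros) (auto simp: continuous_on_eq_continuous_at)
  then obtain d0 where d0: "d0 > 0" "\<And>t. dist t u0 < d0 \<Longrightarrow> dist (z0 * EE lam t - h t) w0 < r"
    unfolding continuous_at_eps_delta w0_def using r by blast
  define \<delta> where "\<delta> = min d0 \<rho>"
  have \<delta>: "\<delta> > 0" "\<delta> \<le> \<rho>" using d0 \<rho> by (auto simp: \<delta>_def)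
  define J where "J = ball u0 \<delta>"
  have JI: "J \<subseteq> I" using \<delta> by (auto simp: J_def I_def)
  have mJ: "\<And>t. t \<in> J \<Longrightarrow> dist (z0 * EE lam t - h t) w0 < r"
    using d0 by (auto simp: J_def \<delta>_def dist_commute)
  define W where "W = ball w0 r"
  define V where "V = {(z, t). t \<in> J \<and> z * EE lam t - h t \<in> W}"
  define \<zeta> where "\<zeta> = (\<lambda>w t. (w + h t) * Ei lam t)"
  have \<zeta>B: "\<zeta> w t \<in> ball z0 \<rho>" if "w \<in> W" "t \<in> J" for w t
  proof -
    have "\<zeta> w t - z0 = (w + h t - z0 * EE lam t) * Ei lam t"
      unfolding \<zeta>_def using EE_Ei[of lam t] by (simp add: algebra_simps)
    then have "norm (\<zeta> w t - z0) = norm (w + h t - z0 * EE lam t)" by (simp add: norm_mult norm_Ei)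
    also have "\<dots> = norm ((w - w0) - (z0 * EE lam t - h t - w0))" by (simp add: algebra_simps)
    also have "\<dots> \<le> norm (w - w0) + norm (z0 * EE lam t - h t - w0)" by (rule norm_triangle_ineq4)
    also have "\<dots> < r + r" using that mJ[OF that(2)] by (intro add_strict_mono) (auto simp: W_def dist_norm norm_minus_commute)
    finally show ?thesis by (simp add: r_def dist_norm norm_minus_commute)
  qed
  have \<zeta>inv: "\<zeta> (z * EE lam t - h t) t = z" for z t
    unfolding \<zeta>_def using EE_Ei[of lam t] by (simp add: algebra_simps)
  have VU: "V \<subseteq> U"
  proof
    fix q assume "q \<in> V"
    then obtain z t where q: "q = (z, t)" "t \<in> J" "z * EE lam t - h t \<in> W" by (auto simp: V_def)
    have "z \<in> ball z0 \<rho>" using \<zeta>B[OF q(3,2)] \<zeta>inv by simp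
    moreover have "t \<in> cball u0 \<rho>" using q(2) JI by (auto simp: I_def)
    ultimately show "q \<in> U" using boxU q(1) by auto
  qed
  have z0V: "(z0, t) \<in> V" if "t \<in> J" for t
    using mJ[OF that] that by (simp add: V_def W_def dist_commute)
  have p0V: "(z0, u0) \<in> V" using z0V \<delta>(1) by (simp add: J_def)
  have sndV: "snd ` V = J"
  proof
    show "snd ` V \<subseteq> J" by (auto simp: V_def)
    show "J \<subseteq> snd ` V" using z0V by force
  qed
  have oV: "open V"
  proof -
    have "continuous_on (UNIV \<times> J) (\<lambda>q. fst q * EE lam (snd q) - h (snd q))"
    proof -
      have "continuous_on J h" using hcI JI continuous_on_subset by blast
      then have "continuous_on (UNIV \<times> J) (\<lambda>q. h (snd q))"
        by (rule continuous_on_compose2[OF _ continuous_on_snd]) auto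
      then show ?thesis by (intro continuous_intros)
    qed
    from continuous_open_preimage[OF this _ open_ball[of w0 r]]
    have "open ((UNIV \<times> J) \<inter> (\<lambda>q. fst q * EE lam (snd q) - h (snd q)) -` ball w0 r)"
      by (simp add: J_def open_Times)
    moreover have "(UNIV \<times> J) \<inter> (\<lambda>q. fst q * EE lam (snd q) - h (snd q)) -` ball w0 r = V"
      by (auto simp: V_def W_def)
    ultimately show ?thesis by simp
  qed
  define G0 where "G0 = (\<lambda>w. g (\<zeta> w u0, u0) * (Ei lam u0 * Ei lam u0))"
  have u0J: "u0 \<in> J" using \<delta> by (simp add: J_def)
  have Gconst: "g (\<zeta> w t, t) * (Ei lam t * Ei lam t) = G0 w" if w: "w \<in> W" and t: "t \<in> J" for w t
  proof -
    have D: "((\<lambda>s. g (\<zeta> w s, s) * (Ei lam s * Ei lam s)) has_vector_derivative 0) (at s)" if s: "s \<in> J" for s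
    proof -
      define z' where "z' = (w + h s) * (- il * Ei lam s) + k s * Ei lam s"
      have hs: "((\<lambda>x. w + h x) has_vector_derivative k s) (at s)"
        using has_vector_derivative_add[OF has_vector_derivative_const hdI[of s]] s JI by auto
      have dz': "((\<lambda>s. \<zeta> w s) has_vector_derivative z') (at s)"
        unfolding \<zeta>_def z'_def il_def
        by (rule has_vector_derivative_mult[OF hs Ei_vd])
      have sU: "(\<zeta> w s, s) \<in> U" using \<zeta>B[OF w s] s JI boxU by (auto simp: I_def)
      have c1: "((\<lambda>s. g (\<zeta> w s, s)) has_vector_derivative (g3 (\<zeta> w s, s) * z' + Gu (\<zeta> w s, s))) (at s)"
        unfolding g_def g3_def by (rule curve_chain[OF oU dz2 c3 du2 dz' sU])
      have c2: "((\<lambda>s. Ei lam s * Ei lam s) has_vector_derivative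
          (Ei lam s * (- (\<i> * of_real lam) * Ei lam s) + (- (\<i> * of_real lam) * Ei lam s) * Ei lam s)) (at s)"
        by (intro has_vector_derivative_mult Ei_vd)
      have c3': "((\<lambda>s. g (\<zeta> w s, s) * (Ei lam s * Ei lam s)) has_vector_derivative
          (g (\<zeta> w s, s) * (Ei lam s * (- (\<i> * of_real lam) * Ei lam s) + (- (\<i> * of_real lam) * Ei lam s) * Ei lam s)
           + (g3 (\<zeta> w s, s) * z' + Gu (\<zeta> w s, s)) * (Ei lam s * Ei lam s))) (at s)"
        by (rule has_vector_derivative_mult[OF c1 c2])
      have z'eq: "z' = - il * \<zeta> w s - c s"
        unfolding z'_def k_def \<zeta>_def by (rule alg1[OF EE_Ei])
      have Rs: "Gu (\<zeta> w s, s) = 2 * il * g (\<zeta> w s, s) + (c s + il * \<zeta> w s) * g3 (\<zeta> w s, s)"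
        by (rule R[OF \<zeta>B[OF w s]]) (use s JI in \<open>auto simp: I_def\<close>)
      have "g3 (\<zeta> w s, s) * z' + Gu (\<zeta> w s, s) = 2 * il * g (\<zeta> w s, s)"
        unfolding z'eq Rs by (simp add: algebra_simps)
      then have "g (\<zeta> w s, s) * (Ei lam s * (- (\<i> * of_real lam) * Ei lam s) + (- (\<i> * of_real lam) * Ei lam s) * Ei lam s)
           + (g3 (\<zeta> w s, s) * z' + Gu (\<zeta> w s, s)) * (Ei lam s * Ei lam s) = 0"
        unfolding il_def by (rule alg2)
      from c3'[unfolded this] show ?thesis .
    qed
    have D': "\<And>s. s \<in> J \<Longrightarrow> ((\<lambda>s. g (\<zeta> w s, s) * (Ei lam s * Ei lam s)) has_vector_derivative 0) (at s within J)"
      using D by (rule has_vector_derivative_at_within)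
    have convJ: "convex J" by (simp add: J_def)
    obtain cc where "\<And>x. x \<in> J \<Longrightarrow> g (\<zeta> w x, x) * (Ei lam x * Ei lam x) = cc"
      using has_vector_derivative_zero_constant[OF convJ D'] by blast
    then show ?thesis using t u0J by (simp add: G0_def)
  qed
  define G1 where "G1 = (\<lambda>w. g3 (\<zeta> w u0, u0) * Ei lam u0 * (Ei lam u0 * Ei lam u0))"
  have dG0: "(G0 has_field_derivative G1 w) (at w)" if w: "w \<in> W" for w
  proof -
    have sU: "(\<zeta> w u0, u0) \<in> U" using \<zeta>B[OF w u0J] u0J JI boxU by (auto simp: I_def)
    have "((\<lambda>\<xi>. g (\<xi>, u0)) has_field_derivative g3 (\<zeta> w u0, u0)) (at ((\<lambda>w. (w + h u0) * Ei lam u0) w))"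
      using dz2[OF sU] by (simp add: g_def g3_def \<zeta>_def)
    moreover have "((\<lambda>w. (w + h u0) * Ei lam u0) has_field_derivative Ei lam u0) (at w)"
      by (auto intro!: derivative_eq_intros)
    ultimately have "((\<lambda>w. g ((w + h u0) * Ei lam u0, u0)) has_field_derivative g3 (\<zeta> w u0, u0) * Ei lam u0) (at w)"
      by (rule DERIV_chain2)
    then show ?thesis unfolding G0_def G1_def \<zeta>_def by (rule DERIV_cmult_right)
  qed
  have G1nz: "G1 w \<noteq> 0" if w: "w \<in> W" for w
  proof -
    have sU: "(\<zeta> w u0, u0) \<in> U" using \<zeta>B[OF w u0J] u0J JI boxU by (auto simp: I_def)
    then show ?thesis using nz3 by (simp add: G1_def g3_def)
  qed
  have oW: "open W" by (simp add: W_def)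
  have holo_of: "H holomorphic_on W" if "\<And>x. x \<in> W \<Longrightarrow> (H has_field_derivative H' x) (at x)" for H H'
    unfolding holomorphic_on_def
  proof
    fix x assume x: "x \<in> W"
    have "H field_differentiable (at x)" unfolding field_differentiable_def using that[OF x] by blast
    then show "H field_differentiable (at x within W)" by (rule field_differentiable_at_within)
  qed
  have hG0: "G0 holomorphic_on W" by (rule holo_of[OF dG0])
  obtain F1 where F1: "\<And>x. x \<in> ball w0 r \<Longrightarrow> (F1 has_field_derivative G0 x) (at x within ball w0 r)"
    by (rule holomorphic_convex_primitive'[OF convex_ball open_ball hG0[unfolded W_def]]) fast
  have F1': "(F1 has_field_derivative G0 x) (at x)" if x: "x \<in> W" for x
  proof -
    have x': "x \<in> ball w0 r" using x by (simp add: W_def)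
    show ?thesis using F1[OF x'] at_within_open[OF x' open_ball] by simp
  qed
  have hF1: "F1 holomorphic_on W" by (rule holo_of[OF F1'])
  obtain F where F: "\<And>x. x \<in> ball w0 r \<Longrightarrow> (F has_field_derivative F1 x) (at x within ball w0 r)"
    by (rule holomorphic_convex_primitive'[OF convex_ball open_ball hF1[unfolded W_def]]) fast
  have F': "(F has_field_derivative F1 x) (at x)" if x: "x \<in> W" for x
  proof -
    have x': "x \<in> ball w0 r" using x by (simp add: W_def)
    show ?thesis using F[OF x'] at_within_open[OF x' open_ball] by simp
  qed
  have hF: "F holomorphic_on W" by (rule holo_of[OF F'])
  have dF: "\<And>x. x \<in> W \<Longrightarrow> deriv F x = F1 x" using F' by (simp add: DERIV_imp_deriv)
  have ddF: "\<And>x. x \<in> W \<Longrightarrow> deriv (deriv F) x = G0 x"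
  proof -
    fix x assume x: "x \<in> W"
    have "deriv (deriv F) x = deriv F1 x"
      by (rule deriv_cong_ev[OF eventually_mono[OF eventually_nhds_in_open[OF oW x]]]) (auto simp: dF)
    then show "deriv (deriv F) x = G0 x" using F1'[OF x] by (simp add: DERIV_imp_deriv)
  qed
  have dddF: "(deriv ^^ 3) F w \<noteq> 0" if w: "w \<in> W" for w
  proof -
    have "deriv (deriv (deriv F)) w = deriv G0 w"
      by (rule deriv_cong_ev[OF eventually_mono[OF eventually_nhds_in_open[OF oW w]]]) (auto simp: ddF)
    also have "\<dots> = G1 w" using dG0[OF w] by (simp add: DERIV_imp_deriv)
    finally show ?thesis using G1nz[OF w] by (simp add: eval_nat_numeral)
  qed
  define A1 where "A1 = (\<lambda>t. pz f (z0, t) - deriv F (z0 * EE lam t - h t) * EE lam t)"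
  define A0 where "A0 = (\<lambda>t. f (z0, t) - F (z0 * EE lam t - h t) - A1 t * z0)"
  have convS: "convex {\<xi>. \<xi> * EE lam t - h t \<in> W}" for t
    unfolding convex_alt
  proof (intro ballI allI impI)
    fix x y and u :: real assume "x \<in> {\<xi>. \<xi> * EE lam t - h t \<in> W}" "y \<in> {\<xi>. \<xi> * EE lam t - h t \<in> W}" "0 \<le> u \<and> u \<le> 1"
    then have "(1 - u) *\<^sub>R (x * EE lam t - h t) + u *\<^sub>R (y * EE lam t - h t) \<in> W"
      using convex_ball[of w0 r] unfolding convex_alt W_def by blast
    then show "(1 - u) *\<^sub>R x + u *\<^sub>R y \<in> {\<xi>. \<xi> * EE lam t - h t \<in> W}"
      by (simp only: mem_Collect_eq alg3)
  qed
  have rep: "f (z, t) = F (z * EE lam t - h t) + A1 t * z + A0 t" if zt: "(z, t) \<in> V" for z t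
  proof -
    have tJ: "t \<in> J" and zW: "z * EE lam t - h t \<in> W" using zt by (auto simp: V_def)
    define St where "St = {\<xi>. \<xi> * EE lam t - h t \<in> W}"
    define K where "K = (\<lambda>\<xi>. f (\<xi>, t) - F (\<xi> * EE lam t - h t))"
    define K1 where "K1 = (\<lambda>\<xi>. pz f (\<xi>, t) - F1 (\<xi> * EE lam t - h t) * EE lam t)"
    have inU: "(\<xi>, t) \<in> U" if "\<xi> \<in> St" for \<xi>
      using that tJ VU by (auto simp: St_def V_def)
    have dK: "(K has_field_derivative K1 \<xi>) (at \<xi>)" if x: "\<xi> \<in> St" for \<xi>
    proof -
      have w: "\<xi> * EE lam t - h t \<in> W" using x by (simp add: St_def)
      have "((\<lambda>\<xi>. F (\<xi> * EE lam t - h t)) has_field_derivative F1 (\<xi> * EE lam t - h t) * EE lam t) (at \<xi>)"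
        using F'[OF w] by (rule DERIV_chain2) (auto intro!: derivative_eq_intros)
      from DERIV_diff[OF dz0[OF inU[OF x]] this] show ?thesis by (simp only: K_def K1_def)
    qed
    have dK1: "(K1 has_field_derivative 0) (at \<xi>)" if x: "\<xi> \<in> St" for \<xi>
    proof -
      have w: "\<xi> * EE lam t - h t \<in> W" using x by (simp add: St_def)
      have "((\<lambda>\<xi>. F1 (\<xi> * EE lam t - h t)) has_field_derivative G0 (\<xi> * EE lam t - h t) * EE lam t) (at \<xi>)"
        using F1'[OF w] by (rule DERIV_chain2) (auto intro!: derivative_eq_intros)
      then have "((\<lambda>\<xi>. F1 (\<xi> * EE lam t - h t) * EE lam t) has_field_derivative G0 (\<xi> * EE lam t - h t) * EE lam t * EE lam t) (at \<xi>)"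
        by (rule DERIV_cmult_right)
      from DERIV_diff[OF dz1[OF inU[OF x]] this]
      have D: "(K1 has_field_derivative pz (pz f) (\<xi>, t) - G0 (\<xi> * EE lam t - h t) * EE lam t * EE lam t) (at \<xi>)"
        by (simp only: K1_def)
      have "G0 (\<xi> * EE lam t - h t) = g (\<xi>, t) * (Ei lam t * Ei lam t)"
        using Gconst[OF w tJ, unfolded \<zeta>inv] by (rule sym)
      then have "pz (pz f) (\<xi>, t) - G0 (\<xi> * EE lam t - h t) * EE lam t * EE lam t = 0"
        unfolding g_def by (simp only: alg4[OF EE_Ei])
      from D[unfolded this] show ?thesis .
    qed
    have z0S: "z0 \<in> St" using z0V[OF tJ] by (simp add: V_def St_def)
    have zS: "z \<in> St" using zW by (simp add: St_def)
    have "K z = K z0 + K1 z0 * (z - z0)"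
      by (rule affine_from_d2[OF convS[of t, folded St_def] dK dK1 z0S zS])
    moreover have "K1 z0 = A1 t"
    proof -
      have w: "z0 * EE lam t - h t \<in> W" using z0S by (simp add: St_def)
      show ?thesis using dF[OF w] by (simp only: K1_def A1_def)
    qed
    ultimately have "f (z, t) - F (z * EE lam t - h t) = (f (z0, t) - F (z0 * EE lam t - h t)) + A1 t * (z - z0)"
      unfolding K_def by (simp only:)
    then show ?thesis unfolding A0_def by (rule alg5)
  qed
  have oJ: "open J" by (simp add: J_def)
  have JS0: "J \<subseteq> S0" using JI IS0 by blast
  have smhJ: "sm J h" by (rule sm_subset[OF smh JI])
  define \<gamma> where "\<gamma> = (\<lambda>t. z0 * EE lam t - h t)"
  have sm\<gamma>: "sm J \<gamma>" unfolding \<gamma>_def by (intro sm_diff sm_mult sm_const smEE smhJ)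
  have \<gamma>W: "\<And>t. t \<in> J \<Longrightarrow> \<gamma> t \<in> W" using mJ by (simp add: \<gamma>_def W_def dist_commute)
  have smpz: "sm S0 (\<lambda>t. pz f (z0, t))"
    unfolding S0_def by (rule sm_transfer[OF slice_sm[OF sf oU, of z0 "[(1,0)]"] open_slice_u[OF oU]]) (unfold mem_Collect_eq, erule it1)
  have smf: "sm S0 (\<lambda>t. f (z0, t))"
    using slice_sm[OF sf oU, of z0 "[]"] by (simp add: S0_def)
  have hdF: "deriv F holomorphic_on W" by (rule holomorphic_deriv[OF hF oW])
  have smA1: "sm J A1"
  proof -
    have "sm J (\<lambda>t. pz f (z0, t) - deriv F (\<gamma> t) * EE lam t)"
      by (intro sm_diff sm_mult smEE sm_subset[OF smpz JS0] sm_holo_comp[OF sm\<gamma> oW \<gamma>W hdF])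
    then show ?thesis by (simp only: A1_def \<gamma>_def)
  qed
  have smA0: "sm J A0"
  proof -
    have "sm J (\<lambda>t. f (z0, t) - F (\<gamma> t) - A1 t * z0)"
      by (intro sm_diff sm_mult sm_const smA1 sm_subset[OF smf JS0] sm_holo_comp[OF sm\<gamma> oW \<gamma>W hF])
    then show ?thesis by (simp only: A0_def \<gamma>_def)
  qed
  have fin: "\<forall>(z, u)\<in>V. z * exp (\<i> * complex_of_real (lam * u)) - h u \<in> W \<and>
           f (z, u) = F (z * exp (\<i> * complex_of_real (lam * u)) - h u) + A1 u * z + A0 u"
    using rep by (auto simp: V_def)
  show ?thesis
    apply (rule exI[of _ V], rule exI[of _ W], rule exI[of _ F], rule exI[of _ h], rule exI[of _ A1], rule exI[of _ A0])
    unfolding sndV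
    using oV p0V VU oW hF dddF sm_smooth_on[OF smhJ oJ] sm_smooth_on[OF smA1 oJ] sm_smooth_on[OF smA0 oJ] fin
    by blast
qed

end


theorem mainTheorem6:
  fixes lam :: real
    and U :: "(complex \<times> real) set"
    and f :: "complex \<times> real \<Rightarrow> complex"
  assumes "open U" and "connected U"
    and "smooth_on U f"
    and "\<And>u. (\<lambda>z. f (z, u)) holomorphic_on {z. (z, u) \<in> U}"
    and "\<And>p. p \<in> U \<Longrightarrow> pz (pz f) p \<noteq> 0"
    and "\<And>p. p \<in> U \<Longrightarrow> pz (pz (pz f)) p \<noteq> 0"
  shows "(\<forall>p\<in>U. pz (\<lambda>q. psi f q / phi f q) p
                 = \<i> * complex_of_real lam * (pz (\<lambda>q. 2 / phi f q) p + 1))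
    \<longleftrightarrow>
    (\<forall>p\<in>U. \<exists>V W F h A1 A0.
        open V \<and> p \<in> V \<and> V \<subseteq> U \<and>
        open W \<and> F holomorphic_on W \<and>
        (\<forall>w\<in>W. (deriv ^^ 3) F w \<noteq> 0) \<and>
        smooth_on (snd ` V) (h :: real \<Rightarrow> complex) \<and>
        smooth_on (snd ` V) (A1 :: real \<Rightarrow> complex) \<and>
        smooth_on (snd ` V) (A0 :: real \<Rightarrow> complex) \<and>
        (\<forall>(z, u)\<in>V. z * exp (\<i> * complex_of_real (lam * u)) - h u \<in> W \<and>
           f (z, u) = F (z * exp (\<i> * complex_of_real (lam * u)) - h u) + A1 u * z + A0 u))"
proof -
  interpret setupf U f using assms by unfold_locales
  show ?thesis
  proof
    assume pde: "\<forall>p\<in>U. pz (\<lambda>q. psi f q / phi f q) p = \<i> * complex_of_real lam * (pz (\<lambda>q. 2 / phi f q) p + 1)"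
    show "\<forall>p\<in>U. \<exists>V W F h A1 A0.
        open V \<and> p \<in> V \<and> V \<subseteq> U \<and>
        open W \<and> F holomorphic_on W \<and>
        (\<forall>w\<in>W. (deriv ^^ 3) F w \<noteq> 0) \<and>
        smooth_on (snd ` V) (h :: real \<Rightarrow> complex) \<and>
        smooth_on (snd ` V) (A1 :: real \<Rightarrow> complex) \<and>
        smooth_on (snd ` V) (A0 :: real \<Rightarrow> complex) \<and>
        (\<forall>(z, u)\<in>V. z * exp (\<i> * complex_of_real (lam * u)) - h u \<in> W \<and>
           f (z, u) = F (z * exp (\<i> * complex_of_real (lam * u)) - h u) + A1 u * z + A0 u)"
    proof
      fix p assume p: "p \<in> U"
      obtain z0 u0 where pe: "p = (z0, u0)" by fastforce
      show "\<exists>V W F h A1 A0.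
        open V \<and> p \<in> V \<and> V \<subseteq> U \<and>
        open W \<and> F holomorphic_on W \<and>
        (\<forall>w\<in>W. (deriv ^^ 3) F w \<noteq> 0) \<and>
        smooth_on (snd ` V) (h :: real \<Rightarrow> complex) \<and>
        smooth_on (snd ` V) (A1 :: real \<Rightarrow> complex) \<and>
        smooth_on (snd ` V) (A0 :: real \<Rightarrow> complex) \<and>
        (\<forall>(z, u)\<in>V. z * exp (\<i> * complex_of_real (lam * u)) - h u \<in> W \<and>
           f (z, u) = F (z * exp (\<i> * complex_of_real (lam * u)) - h u) + A1 u * z + A0 u)"
        unfolding pe by (rule dir_fwd[OF pde p[unfolded pe]])
    qed
  next
    assume rp: "\<forall>p\<in>U. \<exists>V W F h A1 A0.
        open V \<and> p \<in> V \<and> V \<subseteq> U \<and>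
        open W \<and> F holomorphic_on W \<and>
        (\<forall>w\<in>W. (deriv ^^ 3) F w \<noteq> 0) \<and>
        smooth_on (snd ` V) (h :: real \<Rightarrow> complex) \<and>
        smooth_on (snd ` V) (A1 :: real \<Rightarrow> complex) \<and>
        smooth_on (snd ` V) (A0 :: real \<Rightarrow> complex) \<and>
        (\<forall>(z, u)\<in>V. z * exp (\<i> * complex_of_real (lam * u)) - h u \<in> W \<and>
           f (z, u) = F (z * exp (\<i> * complex_of_real (lam * u)) - h u) + A1 u * z + A0 u)"
    show "\<forall>p\<in>U. pz (\<lambda>q. psi f q / phi f q) p = \<i> * complex_of_real lam * (pz (\<lambda>q. 2 / phi f q) p + 1)"
    proof
      fix p assume p: "p \<in> U"
      obtain z u where pe: "p = (z, u)" by fastforce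
      obtain V W F h A1 A0 where
        H: "open V" "p \<in> V" "V \<subseteq> U" "open W" "F holomorphic_on W"
          "\<forall>w\<in>W. (deriv ^^ 3) F w \<noteq> 0" "smooth_on (snd ` V) (h :: real \<Rightarrow> complex)"
          "\<forall>(z, u)\<in>V. z * exp (\<i> * complex_of_real (lam * u)) - h u \<in> W \<and>
           f (z, u) = F (z * exp (\<i> * complex_of_real (lam * u)) - h u) + A1 u * z + A0 u"
        using rp p by meson
      show "pz (\<lambda>q. psi f q / phi f q) p = \<i> * complex_of_real lam * (pz (\<lambda>q. 2 / phi f q) p + 1)"
        unfolding pe by (rule dir_back[OF oU nz2 H(2)[unfolded pe] H(1) H(3) H(4) H(5) H(6) H(7) H(8)])
    qed
  qed
qed

end
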